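(* Let $p,r,n$ be natural numbers with $p+r\le n$, put $X(q)=\binom{n-r}{p}_q\binom{n+1-p}{r}_q\in\mathbb{Z}[q]$, and define $w:\mathrm{Match}(\mathcal G_n)_{p,r}\to\frac12\mathbb{Z}$ by $w(P)=\frac{r+(n-r-p)(p+r)}{2}+\alpha(P)$. Then $w$ takes values in $\mathbb{Z}_{\ge0}$, $$X(q)=\sum_{P\in\mathrm{Match}(\mathcal G_n)_{p,r}}q^{w(P)},$$ and $X(-1)$ equals the number of fixed points of the reflection involution $\sigma$ on $\mathrm{Match}(\mathcal G_n)_{p,r}$. That is, $(\mathrm{Match}(\mathcal G_n)_{p,r},\sigma,X,w)$ exhibits Stembridge's $q=-1$ phenomenon.
   Context: $\mathcal G_n$ ($n\ge0$) is a row of $2n+1$ unit tiles $G_{-n},\dots,G_n$ left to right; $G_i$ has face weight $1$ if $i+n$ is even and $2$ otherwise. $P_{min}$ consists of the top and bottom edges of all weight-$1$ tiles. $\mathrm{Twist}(P)$ is the set of tiles inside cycles of $P\triangle P_{min}$; $y_i(P)$ is the number of twisted tiles of face weight $i$. $\mathrm{Match}(\mathcal G_n)_{p,r}=\{P: y_1(P)=n+1-r,\ y_2(P)=p\}$. Tile exponents $\alpha(G_i)=i/2$ if $G_i$ has face weight $1$ and $\alpha(G_i)=-i/2$ if weight $2$; $\alpha(P)=\sum_{G\in\mathrm{Twist}(P)}\alpha(G)$. $\sigma$ is the involution induced by reflecting $\mathcal G_n$ across its vertical axis of symmetry. Gaussian binomial $\binom nk_q=\frac{(n)_q!}{(k)_q!(n-k)_q!}$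 with $(n)_q=1+q+\dots+q^{n-1}$, $(n)_q!=\prod_{j\le n}(j)_q$. *)

theory Defs
  imports "HOL-Computational_Algebra.Polynomial"
begin

text \<open>The graph G_n: a 2 x (2n+2) ladder of lattice points (x,y), 0 <= x <= 2n+1, y in {0,1}.
  Tile G_i (i = -n..n) occupies columns c..c+1 with c = i+n.\<close>

type_synonym vert = "nat \<times> nat"
type_synonym edge = "vert set"

definition verts :: "nat \<Rightarrow> vert set" where
  "verts n = {0..2*n+1} \<times> {0..1}"

definition edges :: "nat \<Rightarrow> edge set" where
  "edges n = {{(x,y),(x+1,y)} | x y. x < 2*n+1 \<and> y \<le> 1}
           \<union> {{(x,0),(x,1)} | x. x \<le> 2*n+1}"

definition perfect_matching :: "nat \<Rightarrow> edge set \<Rightarrow> bool" where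
  "perfect_matching n P \<longleftrightarrow> P \<subseteq> edges n \<and> (\<forall>v\<in>verts n. \<exists>!e. e \<in> P \<and> v \<in> e)"

definition Matchings :: "nat \<Rightarrow> edge set set" where
  "Matchings n = {P. perfect_matching n P}"

definition tiles :: "nat \<Rightarrow> int set" where
  "tiles n = {-int n..int n}"

definition tile_col :: "nat \<Rightarrow> int \<Rightarrow> nat" where
  "tile_col n i = nat (i + int n)"

definition face_weight :: "nat \<Rightarrow> int \<Rightarrow> nat" where
  "face_weight n i = (if even (i + int n) then 1 else 2)"

definition tile_top :: "nat \<Rightarrow> int \<Rightarrow> edge" where
  "tile_top n i = {(tile_col n i, 1), (tile_col n i + 1, 1)}"

definition tile_bot :: "nat \<Rightarrow> int \<Rightarrow> edge" where
  "tile_bot n i = {(tile_col n i, 0), (tile_col n i + 1, 0)}"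

definition P_min :: "nat \<Rightarrow> edge set" where
  "P_min n = {tile_top n i | i. i \<in> tiles n \<and> face_weight n i = 1}
           \<union> {tile_bot n i | i. i \<in> tiles n \<and> face_weight n i = 1}"

definition symdiff :: "'a set \<Rightarrow> 'a set \<Rightarrow> 'a set" where
  "symdiff A B = (A - B) \<union> (B - A)"

text \<open>A tile lies inside the cycles of the edge set D (a disjoint union of cycles)
  iff a ray from its centre to the outer face crosses an odd number of edges of D.
  The vertical upward ray from the centre of tile i crosses exactly its top edge.\<close>

definition ray_crossed :: "nat \<Rightarrow> int \<Rightarrow> edge set" where
  "ray_crossed n i = {tile_top n i}"

definition inside_cycles :: "nat \<Rightarrow> edge set \<Rightarrow> int \<Rightarrow> bool" where
  "inside_cycles n D i \<longleftrightarrow> odd (card (ray_crossed n i \<inter> D))"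

definition Twist :: "nat \<Rightarrow> edge set \<Rightarrow> int set" where
  "Twist n P = {i \<in> tiles n. inside_cycles n (symdiff P (P_min n)) i}"

definition ycount :: "nat \<Rightarrow> nat \<Rightarrow> edge set \<Rightarrow> nat" where
  "ycount n j P = card {i \<in> Twist n P. face_weight n i = j}"

definition Match :: "nat \<Rightarrow> nat \<Rightarrow> nat \<Rightarrow> edge set set" where
  "Match n p r = {P \<in> Matchings n. ycount n 1 P = n + 1 - r \<and> ycount n 2 P = p}"

definition alpha_tile :: "nat \<Rightarrow> int \<Rightarrow> rat" where
  "alpha_tile n i = (if face_weight n i = 1 then of_int i / 2 else - of_int i / 2)"

definition alpha :: "nat \<Rightarrow> edge set \<Rightarrow> rat" where
  "alpha n P = (\<Sum>i\<in>Twist n P. alpha_tile n i)"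

definition wt :: "nat \<Rightarrow> nat \<Rightarrow> nat \<Rightarrow> edge set \<Rightarrow> rat" where
  "wt n p r P = (of_nat r + of_nat (n - r - p) * of_nat (p + r)) / 2 + alpha n P"

definition reflect_edge :: "nat \<Rightarrow> edge \<Rightarrow> edge" where
  "reflect_edge n e = (\<lambda>(x,y). (2*n+1-x, y)) ` e"

definition sigma :: "nat \<Rightarrow> edge set \<Rightarrow> edge set" where
  "sigma n P = reflect_edge n ` P"

definition qint :: "nat \<Rightarrow> int poly" where
  "qint j = (\<Sum>i<j. monom 1 i)"

definition qfact :: "nat \<Rightarrow> int poly" where
  "qfact n = (\<Prod>j\<in>{1..n}. qint j)"

definition qbinom :: "nat \<Rightarrow> nat \<Rightarrow> int poly" where
  "qbinom n k = qfact n div (qfact k * qfact (n - k))"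

end

theory Submission
  imports Defs
begin


fun msp :: "nat \<Rightarrow> nat \<Rightarrow> int poly" where
  "msp N 0 = 1"
| "msp 0 (Suc k) = 0"
| "msp (Suc N) (Suc k) = msp N (Suc k) + monom 1 N * msp (Suc N) k"

lemma qint_Suc: "qint (Suc j) = qint j + monom 1 j"
  by (simp add: qint_def)

lemma qint_add: "qint (a + b) = qint a + monom 1 a * qint b"
proof (induction b)
  case 0 then show ?case by (simp add: qint_def)
next
  case (Suc b)
  then show ?case by (simp add: qint_Suc algebra_simps mult_monom)
qed

lemma qfact_Suc: "qfact (Suc n) = qfact n * qint (Suc n)"
  by (simp add: qfact_def)

lemma qint_nz: "j > 0 \<Longrightarrow> qint j \<noteq> 0"
proof -
  assume "j > 0"
  have "coeff (qint j) 0 = 1" using \<open>j>0\<close> by (simp add: qint_def coeff_sum coeff_monom)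
  then show ?thesis by auto
qed

lemma qfact_nz: "qfact n \<noteq> 0"
  by (induction n) (auto simp: qfact_Suc qint_nz, simp add: qfact_def)

lemma msp_1: "msp (Suc 0) k = 1"
  by (induction k) auto

lemma msp_prod: "msp (Suc N) k * qfact k * qfact N = qfact (N + k)"
proof (induction k arbitrary: N)
  case 0 then show ?case by (simp add: qfact_def)
next
  case (Suc k)
  note IHk = Suc.IH
  show ?case
  proof (induction N)
    case 0 then show ?case by (simp add: msp_1 qfact_def)
  next
    case (Suc N)
    note IHn = Suc.IH
    have e: "msp (Suc (Suc N)) (Suc k) = msp (Suc N) (Suc k) + monom 1 (Suc N) * msp (Suc (Suc N)) k"
      by simp
    have t1: "msp (Suc N) (Suc k) * qfact (Suc k) * qfact (Suc N) = qfact (N + Suc k) * qint (Suc N)"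
      using IHn by (simp only: qfact_Suc[of N] mult.assoc[symmetric])
    have t2: "monom 1 (Suc N) * msp (Suc (Suc N)) k * qfact (Suc k) * qfact (Suc N)
        = monom 1 (Suc N) * qfact (Suc N + k) * qint (Suc k)"
    proof -
      have "monom 1 (Suc N) * msp (Suc (Suc N)) k * qfact (Suc k) * qfact (Suc N)
         = monom 1 (Suc N) * (msp (Suc (Suc N)) k * qfact k * qfact (Suc N)) * qint (Suc k)"
        by (simp only: qfact_Suc[of k]) (simp add: algebra_simps)
      then show ?thesis using IHk[of "Suc N"] by simp
    qed
    have "qfact (Suc N + Suc k) = qfact (N + Suc k) * qint (Suc N + Suc k)"
      by (simp add: qfact_Suc)
    also have "qint (Suc N + Suc k) = qint (Suc N) + monom 1 (Suc N) * qint (Suc k)"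
      by (rule qint_add)
    finally have "qfact (Suc N + Suc k) = qfact (N + Suc k) * qint (Suc N) + monom 1 (Suc N) * qfact (Suc N + k) * qint (Suc k)"
      by (simp add: algebra_simps)
    moreover have "msp (Suc (Suc N)) (Suc k) * qfact (Suc k) * qfact (Suc N) = msp (Suc N) (Suc k) * qfact (Suc k) * qfact (Suc N) + monom 1 (Suc N) * msp (Suc (Suc N)) k * qfact (Suc k) * qfact (Suc N)"
      by (simp only: e distrib_right)
    ultimately show ?case using t1 t2 by (simp del: msp.simps)
  qed
qed

lemma qbinom_msp: "qbinom (N + k) k = msp (Suc N) k"
proof -
  have "qbinom (N + k) k = (msp (Suc N) k * (qfact k * qfact N)) div (qfact k * qfact N)"
    unfolding qbinom_def using msp_prod[of N k] by (simp add: algebra_simps)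
  also have "\<dots> = msp (Suc N) k" using qfact_nz by simp
  finally show ?thesis .
qed


definition indep :: "nat set \<Rightarrow> bool" where
  "indep S \<longleftrightarrow> (\<forall>c\<in>S. Suc c \<notin> S)"

definition ev :: "nat set \<Rightarrow> nat" where "ev S = card {c\<in>S. even c}"
definition od :: "nat set \<Rightarrow> nat" where "od S = card {c\<in>S. odd c}"

definition IS :: "nat \<Rightarrow> nat \<Rightarrow> nat \<Rightarrow> nat set set" where
  "IS L e d = {S. S \<subseteq> {..<L} \<and> indep S \<and> ev S = e \<and> od S = d}"

definition gs :: "nat set \<Rightarrow> nat" where "gs S = (\<Sum>c\<in>S. c div 2)"

definition H :: "nat \<Rightarrow> nat \<Rightarrow> nat \<Rightarrow> int poly" where
  "H L e d = (\<Sum>S\<in>IS L e d. monom 1 (gs S))"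

lemma IS_finite: "finite (IS L e d)"
proof -
  have "IS L e d \<subseteq> Pow {..<L}" by (auto simp: IS_def)
  then show ?thesis by (rule finite_subset) simp
qed

lemma IS_fin: "T \<in> IS L e d \<Longrightarrow> finite T"
  by (auto simp: IS_def intro: finite_subset)
lemma IS_out: "T \<in> IS L e d \<Longrightarrow> Suc L \<notin> T"
  by (auto simp: IS_def)

lemma IS_split: "IS (Suc (Suc L)) e d = IS (Suc L) e d \<union> {S \<in> IS (Suc (Suc L)) e d. Suc L \<in> S}"
  by (auto simp: IS_def less_Suc_eq)

lemma ev_insert: "finite T \<Longrightarrow> x \<notin> T \<Longrightarrow> ev (insert x T) = ev T + (if even x then 1 else 0)"
proof -
  assume a: "finite T" "x \<notin> T"
  have "{c \<in> insert x T. even c} = (if even x then insert x {c\<in>T. even c} else {c\<in>T. even c})" by auto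
  then show ?thesis using a by (simp add: ev_def)
qed
lemma od_insert: "finite T \<Longrightarrow> x \<notin> T \<Longrightarrow> od (insert x T) = od T + (if odd x then 1 else 0)"
proof -
  assume a: "finite T" "x \<notin> T"
  have "{c \<in> insert x T. odd c} = (if odd x then insert x {c\<in>T. odd c} else {c\<in>T. odd c})" by auto
  then show ?thesis using a by (simp add: od_def)
qed

lemma IS_top:
  "{S \<in> IS (Suc (Suc L)) e d. Suc L \<in> S} =
     insert (Suc L) ` {T \<in> IS L (e - (if even (Suc L) then 1 else 0)) (d - (if odd (Suc L) then 1 else 0)).
        (if even (Suc L) then e \<ge> 1 else d \<ge> 1)}"
  (is "?A = ?B")
proof
  show "?A \<subseteq> ?B"
  proof
    fix S assume S: "S \<in> ?A"
    let ?T = "S - {Suc L}"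
    have fin: "finite ?T" using S by (auto simp: IS_def intro: finite_subset)
    have SL: "L \<notin> S" using S by (auto simp: IS_def indep_def)
    have T1: "?T \<subseteq> {..<L}" using S SL by (auto simp: IS_def less_Suc_eq)
    have T2: "indep ?T" using S by (auto simp: IS_def indep_def)
    have Sins: "S = insert (Suc L) ?T" using S by auto
    have "ev S = ev ?T + (if even (Suc L) then 1 else 0)" "od S = od ?T + (if odd (Suc L) then 1 else 0)"
      using ev_insert[OF fin, of "Suc L"] od_insert[OF fin, of "Suc L"] Sins by auto
    then show "S \<in> ?B" using S T1 T2 Sins
      by (auto simp: IS_def image_iff split: if_splits intro!: exI[of _ ?T])
  qed
next
  show "?B \<subseteq> ?A"
  proof
    fix S assume "S \<in> ?B"
    then obtain T where T: "T \<in> IS L (e - (if even (Suc L) then 1 else 0)) (d - (if odd (Suc L) then 1 else 0))"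
      "if even (Suc L) then e \<ge> 1 else d \<ge> 1" and S: "S = insert (Suc L) T" by auto
    have fin: "finite T" using T by (auto simp: IS_def intro: finite_subset)
    have nT: "Suc L \<notin> T" using T by (auto simp: IS_def)
    have "ev S = ev T + (if even (Suc L) then 1 else 0)" "od S = od T + (if odd (Suc L) then 1 else 0)"
      using ev_insert[OF fin nT] od_insert[OF fin nT] S by auto
    moreover have "S \<subseteq> {..<Suc (Suc L)}" "indep S" using T S
      by (auto simp: IS_def indep_def)
    ultimately show "S \<in> ?A" using T S by (auto simp: IS_def split: if_splits)
  qed
qed

lemma gs_insert: "finite T \<Longrightarrow> x \<notin> T \<Longrightarrow> gs (insert x T) = x div 2 + gs T"
  by (simp add: gs_def)

lemma gs_insert_IS: "T \<in> IS L e d \<Longrightarrow> gs (insert (Suc L) T) = Suc L div 2 + gs T"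
  using gs_insert[OF IS_fin IS_out] by blast

lemma H_rec: "H (Suc (Suc L)) e d = H (Suc L) e d +
   (if (if even (Suc L) then e \<ge> 1 else d \<ge> 1) then
     monom 1 (Suc L div 2) * H L (e - (if even (Suc L) then 1 else 0)) (d - (if odd (Suc L) then 1 else 0))
    else 0)"
proof -
  let ?e = "e - (if even (Suc L) then 1 else 0)" and ?d = "d - (if odd (Suc L) then 1 else 0)"
  let ?c = "if even (Suc L) then e \<ge> 1 else d \<ge> 1"
  have disj: "IS (Suc L) e d \<inter> {S \<in> IS (Suc (Suc L)) e d. Suc L \<in> S} = {}"
    by (auto simp: IS_def)
  have fin2: "finite {S \<in> IS (Suc (Suc L)) e d. Suc L \<in> S}" using IS_finite by auto
  have "H (Suc (Suc L)) e d = H (Suc L) e d + (\<Sum>S\<in>{S \<in> IS (Suc (Suc L)) e d. Suc L \<in> S}. monom 1 (gs S))"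
    unfolding H_def by (subst IS_split, rule sum.union_disjoint) (use IS_finite fin2 disj in auto)
  also have "(\<Sum>S\<in>{S \<in> IS (Suc (Suc L)) e d. Suc L \<in> S}. monom (1::int) (gs S))
      = (\<Sum>T\<in>{T \<in> IS L ?e ?d. ?c}. monom 1 (gs (insert (Suc L) T)))"
    unfolding IS_top
  proof (subst sum.reindex)
    show "inj_on (insert (Suc L)) {T \<in> IS L ?e ?d. ?c}"
    proof (rule inj_onI)
      fix x y assume "x \<in> {T \<in> IS L ?e ?d. ?c}" "y \<in> {T \<in> IS L ?e ?d. ?c}" "insert (Suc L) x = insert (Suc L) y"
      moreover have "Suc L \<notin> x" "Suc L \<notin> y" using calculation by (auto simp: IS_def)
      ultimately show "x = y" by (simp add: insert_ident)
    qed
  qed simp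
  also have "\<dots> = (\<Sum>T\<in>{T \<in> IS L ?e ?d. ?c}. monom 1 (Suc L div 2) * monom 1 (gs T))"
    by (rule sum.cong[OF refl]) (auto simp: gs_insert_IS mult_monom)
  also have "\<dots> = (if ?c then monom 1 (Suc L div 2) * H L ?e ?d else 0)"
    by (simp add: H_def sum_distrib_left)
  finally show ?thesis .
qed

lemma H_0: "H 0 e d = (if e = 0 \<and> d = 0 then 1 else 0)"
proof -
  have "IS 0 e d = (if e = 0 \<and> d = 0 then {{}} else {})"
    by (auto simp: IS_def indep_def ev_def od_def)
  then show ?thesis by (simp add: H_def gs_def)
qed

lemma H_1: "H (Suc 0) e d = (if d = 0 \<and> e \<le> 1 then 1 else 0)"
proof -
  have P: "{S. S \<subseteq> {..<Suc 0}} = {{}, {0}}" by auto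
  have "IS (Suc 0) e d = {S \<in> {{}, {0}}. ev S = e \<and> od S = d}"
    unfolding IS_def using P by (auto simp: indep_def)
  also have "\<dots> = (if d = 0 \<and> e = 0 then {{}} else if d = 0 \<and> e = 1 then {{0}} else {})"
  proof -
    have "{c::nat. c = 0 \<and> even c} = {0}" "{c::nat. c = 0 \<and> odd c} = {}" by (auto simp: odd_pos)
    then have "ev {} = 0" "od {} = 0" "ev {0} = 1" "od {0} = 0" unfolding ev_def od_def by simp_all
    then show ?thesis by auto
  qed
  finally show ?thesis by (auto simp: H_def gs_def)
qed


fun tri :: "nat \<Rightarrow> nat" where "tri 0 = 0" | "tri (Suc k) = tri k + k"

definition K :: "nat \<Rightarrow> nat \<Rightarrow> nat \<Rightarrow> int poly" where
  "K L e d = (if 2*(e+d) \<le> L+1 then monom 1 (tri (e+d)) * msp ((L+1-2*(e+d)) div 2 + 1) e * msp ((L+2-2*(e+d)) div 2) d else 0)"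

lemma K_eq: "k = e + d \<Longrightarrow> L + 1 = 2*k + m \<Longrightarrow> s1 = m div 2 + 1 \<Longrightarrow> s2 = (m+1) div 2 \<Longrightarrow>
   K L e d = monom 1 (tri k) * msp s1 e * msp s2 d"
  unfolding K_def by (simp add: Suc_diff_le)

lemma K_zero: "L + 1 < 2*(e+d) \<Longrightarrow> K L e d = 0"
  unfolding K_def by simp

lemma KA0: "K (2*j+3) 0 d = K (2*j+2) 0 d"
proof -
  consider "d \<le> j+1" | "d = j+2" | "d > j+2" by linarith
  then show ?thesis
  proof cases
    case 1
    define a where "a = j + 2 - d"
    have a: "j + 2 = a + d" using 1 by (simp add: a_def)
    have "a \<ge> 1" using a 1 by simp
    have "K (2*j+3) 0 d = monom 1 (tri d) * msp (Suc a) 0 * msp a d"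
      by (rule K_eq[where m = "2*a"]) (use a in simp_all)
    moreover have "K (2*j+2) 0 d = monom 1 (tri d) * msp a 0 * msp a d"
      by (rule K_eq[where m = "2*a-1"]) (use a \<open>a\<ge>1\<close> in simp_all)
    ultimately show ?thesis by simp
  next
    case 2
    then obtain d' where d': "d = Suc d'" by (cases d) auto
    have "K (2*j+3) 0 d = monom 1 (tri d) * msp 1 0 * msp 0 d"
      by (rule K_eq[where m = "0"]) (use 2 in simp_all)
    moreover have "K (2*j+2) 0 d = 0" by (rule K_zero) (use 2 in simp)
    ultimately show ?thesis using d' by simp
  next
    case 3
    then show ?thesis by (simp add: K_zero)
  qed
qed

lemma KA1: "K (2*j+3) (Suc e) d = K (2*j+2) (Suc e) d + monom 1 (Suc j) * K (2*j+1) e d"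
proof -
  let ?k = "Suc e + d"
  consider "?k \<le> j+1" | "?k = j+2" | "?k > j+2" by linarith
  then show ?thesis
  proof cases
    case 1
    define a where "a = j + 2 - ?k"
    have a: "j + 2 = a + ?k" using 1 unfolding a_def by linarith
    have "a \<ge> 1" using a 1 by simp
    have k1: "K (2*j+3) (Suc e) d = monom 1 (tri ?k) * msp (Suc a) (Suc e) * msp a d"
      by (rule K_eq[where m = "2*a"]) (use a in simp_all)
    have k2: "K (2*j+2) (Suc e) d = monom 1 (tri ?k) * msp a (Suc e) * msp a d"
      by (rule K_eq[where m = "2*a-1"]) (use a \<open>a\<ge>1\<close> in simp_all)
    have k3: "K (2*j+1) e d = monom 1 (tri (e+d)) * msp (Suc a) e * msp a d"
      by (rule K_eq[where m = "2*a"]) (use a in simp_all)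
    have exm: "monom (1::int) (Suc j) * monom 1 (tri (e+d)) = monom 1 (tri ?k) * monom 1 a"
      using a by (simp add: mult_monom add_ac)
    have rec: "msp (Suc a) (Suc e) = msp a (Suc e) + monom 1 a * msp (Suc a) e" by simp
    show ?thesis unfolding k1 k2 k3 rec using exm by algebra
  next
    case 2
    have k1: "K (2*j+3) (Suc e) d = monom 1 (tri ?k) * msp (Suc 0) (Suc e) * msp 0 d"
      by (rule K_eq[where m = "0"]) (use 2 in simp_all)
    have k2: "K (2*j+2) (Suc e) d = 0" by (rule K_zero) (use 2 in simp)
    have k3: "K (2*j+1) e d = monom 1 (tri (e+d)) * msp (Suc 0) e * msp 0 d"
      by (rule K_eq[where m = "0"]) (use 2 in simp_all)
    have exm: "monom (1::int) (Suc j) * monom 1 (tri (e+d)) = monom 1 (tri ?k)"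
      using 2 by (simp add: mult_monom add_ac)
    show ?thesis unfolding k1 k2 k3 msp_1 by (subst exm[symmetric]) (simp add: mult.assoc)
  next
    case 3
    then show ?thesis by (simp add: K_zero)
  qed
qed

lemma KB0: "K (2*j+2) e 0 = K (2*j+1) e 0"
proof (cases "e \<le> j+1")
  case True
  define a where "a = j + 1 - e"
  have a: "j + 1 = a + e" using True unfolding a_def by linarith
  have "K (2*j+2) e 0 = monom 1 (tri e) * msp (Suc a) e * msp (Suc a) 0"
    by (rule K_eq[where m = "2*a+1"]) (use a in simp_all)
  moreover have "K (2*j+1) e 0 = monom 1 (tri e) * msp (Suc a) e * msp a 0"
    by (rule K_eq[where m = "2*a"]) (use a in simp_all)
  ultimately show ?thesis by simp
next
  case False
  then show ?thesis by (simp add: K_zero)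
qed

lemma KB1: "K (2*j+2) e (Suc d) = K (2*j+1) e (Suc d) + monom 1 j * K (2*j) e d"
proof -
  let ?k = "e + Suc d"
  show ?thesis
  proof (cases "?k \<le> j+1")
    case True
    define a where "a = j + 1 - ?k"
    have a: "j + 1 = a + ?k" using True unfolding a_def by linarith
    have k1: "K (2*j+2) e (Suc d) = monom 1 (tri ?k) * msp (Suc a) e * msp (Suc a) (Suc d)"
      by (rule K_eq[where m = "2*a+1"]) (use a in simp_all)
    have k2: "K (2*j+1) e (Suc d) = monom 1 (tri ?k) * msp (Suc a) e * msp a (Suc d)"
      by (rule K_eq[where m = "2*a"]) (use a in simp_all)
    have k3: "K (2*j) e d = monom 1 (tri (e+d)) * msp (Suc a) e * msp (Suc a) d"
      by (rule K_eq[where m = "2*a+1"]) (use a in simp_all)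
    have exm: "monom (1::int) j * monom 1 (tri (e+d)) = monom 1 (tri ?k) * monom 1 a"
      using a by (simp add: mult_monom add_ac)
    have rec: "msp (Suc a) (Suc d) = msp a (Suc d) + monom 1 a * msp (Suc a) d" by simp
    show ?thesis unfolding k1 k2 k3 rec using exm by algebra
  next
    case False
    then show ?thesis by (simp add: K_zero)
  qed
qed


lemma H_K_base0: "H 0 e d = K 0 e d"
  by (simp add: H_0 K_def)

lemma H_K_base1: "H (Suc 0) e d = K (Suc 0) e d"
proof (cases "e + d \<le> 1")
  case True
  then consider "e = 0" "d = 0" | "e = 1" "d = 0" | "e = 0" "d = 1" by linarith
  then show ?thesis by cases (simp_all add: H_1 K_def msp_1 numeral_2_eq_2)
next
  case False
  then show ?thesis by (auto simp: H_1 K_def)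
qed

lemma H_K: "H L e d = K L e d \<and> H (Suc L) e d = K (Suc L) e d"
proof (induction L arbitrary: e d)
  case 0
  then show ?case using H_K_base0 H_K_base1 by simp
next
  case (Suc L)
  have IH0: "\<And>e d. H L e d = K L e d" and IH1: "\<And>e d. H (Suc L) e d = K (Suc L) e d"
    using Suc.IH by auto
  have "H (Suc (Suc L)) e d = K (Suc (Suc L)) e d"
  proof (cases "odd L")
    case True
    then obtain j where j: "L = 2*j+1" using oddE by blast
    show ?thesis
    proof (cases e)
      case 0
      have "H (Suc (Suc L)) e d = H (Suc L) e d" using H_rec[of L e d] j 0 by simp
      then show ?thesis using IH1 KA0[of j d] j 0 by (simp add: numeral_3_eq_3 numeral_2_eq_2)
    next
      case (Suc e')
      have "H (Suc (Suc L)) e d = H (Suc L) e d + monom 1 (Suc j) * H L e' d" using H_rec[of L e d] j Suc by simp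
      then show ?thesis using IH1 IH0 KA1[of j e' d] j Suc by (simp add: numeral_3_eq_3 numeral_2_eq_2)
    qed
  next
    case False
    then obtain j where j: "L = 2*j" using evenE by blast
    show ?thesis
    proof (cases d)
      case 0
      have "H (Suc (Suc L)) e d = H (Suc L) e d" using H_rec[of L e d] j 0 by simp
      then show ?thesis using IH1 KB0[of j e] j 0 by (simp add: numeral_3_eq_3 numeral_2_eq_2)
    next
      case (Suc d')
      have "H (Suc (Suc L)) e d = H (Suc L) e d + monom 1 j * H L e d'" using H_rec[of L e d] j Suc by simp
      then show ?thesis using IH1 IH0 KB1[of j e d'] j Suc by (simp add: numeral_3_eq_3 numeral_2_eq_2)
    qed
  qed
  then show ?case using IH1 by simp
qed


lemma msp_suc_simp: "msp (Suc N) (Suc k) = msp N (Suc k) + monom 1 N * msp (Suc N) k" by simp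

lemma msp_m1: "poly (msp N k) (-1) = (if even N \<and> odd k then 0 else poly (msp ((N+1) div 2) (k div 2)) 1)"
proof (induction N k rule: msp.induct)
  case (1 N) then show ?case by simp
next
  case (2 k)
  show ?case
  proof (cases "odd (Suc k)")
    case True then show ?thesis by simp
  next
    case False
    then have "Suc k div 2 = Suc (k div 2)" by presburger
    then show ?thesis by simp
  qed
next
  case (3 N k)
  have "poly (msp (Suc N) (Suc k)) (-1) = poly (msp N (Suc k)) (-1) + (-1)^N * poly (msp (Suc N) k) (-1)"
    by (simp add: poly_monom)
  also have "\<dots> = (if even N \<and> odd (Suc k) then 0 else poly (msp ((N+1) div 2) (Suc k div 2)) 1)
      + (-1)^N * (if even (Suc N) \<and> odd k then 0 else poly (msp ((Suc N+1) div 2) (k div 2)) 1)"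
    using 3 by simp
  also have "\<dots> = (if even (Suc N) \<and> odd (Suc k) then 0 else poly (msp ((Suc N + 1) div 2) (Suc k div 2)) 1)"
  proof (cases "even N")
    case eN: True
    then obtain a where a: "N = 2*a" by blast
    show ?thesis
    proof (cases "even k")
      case True
      then obtain b where b: "k = 2*b" by blast
      show ?thesis using a b by simp
    next
      case False
      then obtain b where b: "k = 2*b+1" using oddE by blast
      have "Suc k div 2 = Suc b" "(N+1) div 2 = a" "(Suc N + 1) div 2 = Suc a" "k div 2 = b" using a b by simp_all
      then show ?thesis using a b by (simp add: poly_monom)
    qed
  next
    case oN: False
    then obtain a where a: "N = 2*a+1" using oddE by blast
    show ?thesis
    proof (cases "even k")
      case True
      then obtain b where b: "k = 2*b" by blast
      show ?thesis using a b by simp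
    next
      case False
      then obtain b where b: "k = 2*b+1" using oddE by blast
      show ?thesis using a b by simp
    qed
  qed
  finally show ?case .
qed

lemma indep_bound: "S \<subseteq> {..<L} \<Longrightarrow> indep S \<Longrightarrow> 2 * card S \<le> L + 1 \<and> tri (card S) \<le> gs S"
proof (induction L arbitrary: S rule: less_induct)
  case (less L)
  show ?case
  proof (cases "L < 2")
    case True
    then have "S \<subseteq> {0}" using less.prems by auto
    then have "S = {} \<or> S = {0}" by auto
    then show ?thesis using True less.prems by (auto simp: gs_def)
  next
    case False
    define L' where "L' = L - 2"
    have L': "L = Suc (Suc L')" using False unfolding L'_def by simp
    show ?thesis
    proof (cases "Suc L' \<in> S")
      case False
      then have "S \<subseteq> {..<Suc L'}" using less.prems L' by (auto simp: less_Suc_eq)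
      then show ?thesis using less.IH[of "Suc L'" S] less.prems L' by simp
    next
      case True
      let ?T = "S - {Suc L'}"
      have "L' \<notin> S" using True less.prems by (auto simp: indep_def)
      then have T1: "?T \<subseteq> {..<L'}" using less.prems L' by (auto simp: less_Suc_eq)
      have T2: "indep ?T" using less.prems by (auto simp: indep_def)
      have fin: "finite ?T" using T1 finite_subset by blast
      have IH: "2 * card ?T \<le> L' + 1 \<and> tri (card ?T) \<le> gs ?T" using less.IH[OF _ T1 T2] L' by simp
      have S: "S = insert (Suc L') ?T" using True by auto
      have finS: "finite S" using less.prems finite_subset by blast
      have c: "card S = Suc (card ?T)" using card_Suc_Diff1[OF finS True] by simp
      have g: "gs S = Suc L' div 2 + gs ?T" using fin by (subst S, subst gs_insert) auto
      have "card ?T \<le> Suc L' div 2" using IH by linarith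
      then show ?thesis using IH c g L' by simp
    qed
  qed
qed

lemma card_ev_od: "finite S \<Longrightarrow> card S = ev S + od S"
proof -
  assume f: "finite S"
  have "S = {c\<in>S. even c} \<union> {c\<in>S. odd c}" by auto
  then have "card S = card ({c\<in>S. even c} \<union> {c\<in>S. odd c})" by simp
  also have "\<dots> = ev S + od S" unfolding ev_def od_def by (rule card_Un_disjoint) (use f in auto)
  finally show ?thesis .
qed

lemma H_closed: "p + r \<le> n \<Longrightarrow> H (2*n+1) r p = monom 1 (tri (p+r)) * (msp (n+1-(p+r)) p * msp (n+2-(p+r)) r)"
proof -
  assume h: "p + r \<le> n"
  have "H (2*n+1) r p = K (2*n+1) r p" using H_K by blast
  also have "\<dots> = monom 1 (tri (p+r)) * msp (n+2-(p+r)) r * msp (n+1-(p+r)) p"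
    by (rule K_eq[where m = "2*(n+1-(p+r))"]) (use h in simp_all)
  finally show ?thesis by (simp add: algebra_simps)
qed

lemma X_msp: "p + r \<le> n \<Longrightarrow> qbinom (n - r) p * qbinom (n + 1 - p) r = msp (n+1-(p+r)) p * msp (n+2-(p+r)) r"
proof -
  assume h: "p + r \<le> n"
  have 1: "qbinom (n - r) p = msp (n+1-(p+r)) p"
    using qbinom_msp[of "n-r-p" p] h by (simp add: Suc_diff_le add.commute)
  have 2: "qbinom (n + 1 - p) r = msp (n+2-(p+r)) r"
    using qbinom_msp[of "n+1-p-r" r] h by (simp add: Suc_diff_le)
  show ?thesis using 1 2 by simp
qed

lemma sum_shift: "p + r \<le> n \<Longrightarrow>
   (\<Sum>S\<in>IS (2*n+1) r p. monom 1 (gs S - tri (p+r))) = qbinom (n - r) p * qbinom (n + 1 - p) r"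
proof -
  assume h: "p + r \<le> n"
  have ge: "\<And>S. S \<in> IS (2*n+1) r p \<Longrightarrow> tri (p+r) \<le> gs S"
  proof -
    fix S assume S: "S \<in> IS (2*n+1) r p"
    then have "card S = p + r" using card_ev_od[OF IS_fin[OF S]] by (auto simp: IS_def)
    then show "tri (p+r) \<le> gs S" using indep_bound[of S "2*n+1"] S by (auto simp: IS_def)
  qed
  have "monom 1 (tri (p+r)) * (\<Sum>S\<in>IS (2*n+1) r p. monom 1 (gs S - tri (p+r)))
      = (\<Sum>S\<in>IS (2*n+1) r p. monom (1::int) (gs S))"
    unfolding sum_distrib_left by (rule sum.cong[OF refl]) (simp add: mult_monom ge)
  also have "\<dots> = monom 1 (tri (p+r)) * (qbinom (n - r) p * qbinom (n + 1 - p) r)"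
    using H_closed[OF h] X_msp[OF h] by (simp add: H_def)
  finally show ?thesis by simp
qed


definition Rf :: "nat \<Rightarrow> nat set \<Rightarrow> nat set" where "Rf n S = (\<lambda>c. 2*n - c) ` S"

lemma ev_Un: "finite A \<Longrightarrow> finite B \<Longrightarrow> A \<inter> B = {} \<Longrightarrow> ev (A \<union> B) = ev A + ev B"
proof -
  assume a: "finite A" "finite B" "A \<inter> B = {}"
  have "{c \<in> A \<union> B. even c} = {c\<in>A. even c} \<union> {c\<in>B. even c}" by auto
  then show ?thesis unfolding ev_def using a by (simp add: card_Un_disjoint disjoint_iff)
qed

lemma od_Un: "finite A \<Longrightarrow> finite B \<Longrightarrow> A \<inter> B = {} \<Longrightarrow> od (A \<union> B) = od A + od B"
proof -
  assume a: "finite A" "finite B" "A \<inter> B = {}"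
  have "{c \<in> A \<union> B. odd c} = {c\<in>A. odd c} \<union> {c\<in>B. odd c}" by auto
  then show ?thesis unfolding od_def using a by (simp add: card_Un_disjoint disjoint_iff)
qed

lemma inj_R: "inj_on (\<lambda>c. 2*n - c) {..2*(n::nat)}"
  by (auto simp: inj_on_def)

lemma par_R: "c \<le> 2*n \<Longrightarrow> even (2*n - c) = even (c::nat)"
  by presburger

lemma filter_image: "(\<And>c. c \<in> U \<Longrightarrow> P (f c) = P c) \<Longrightarrow> {x \<in> f ` U. P x} = f ` {c \<in> U. P c}"
  by auto

lemma ev_R: "U \<subseteq> {..2*n} \<Longrightarrow> ev (Rf n U) = ev U"
proof -
  assume U: "U \<subseteq> {..2*n}"
  have "{c \<in> Rf n U. even c} = (\<lambda>c. 2*n - c) ` {c\<in>U. even c}"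
    unfolding Rf_def by (rule filter_image) (use U par_R in auto)
  moreover have "inj_on (\<lambda>c. 2*n - c) {c\<in>U. even c}" by (rule inj_on_subset[OF inj_R[of n]]) (use U in auto)
  ultimately show ?thesis unfolding ev_def by (simp add: card_image)
qed

lemma od_R: "U \<subseteq> {..2*n} \<Longrightarrow> od (Rf n U) = od U"
proof -
  assume U: "U \<subseteq> {..2*n}"
  have "{c \<in> Rf n U. odd c} = (\<lambda>c. 2*n - c) ` {c\<in>U. odd c}"
    unfolding Rf_def by (rule filter_image) (use U par_R in auto)
  moreover have "inj_on (\<lambda>c. 2*n - c) {c\<in>U. odd c}" by (rule inj_on_subset[OF inj_R[of n]]) (use U in auto)
  ultimately show ?thesis unfolding od_def by (simp add: card_image)
qed

lemma R_sub: "U \<subseteq> {..<n} \<Longrightarrow> Rf n U \<subseteq> {n<..2*n}"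
  unfolding Rf_def by auto

lemma RR: assumes "U \<subseteq> {..2*n}" shows "Rf n (Rf n U) = U"
proof -
  have "(\<lambda>c. 2*n - (2*n - c)) ` U = (\<lambda>c. c) ` U" by (rule image_cong) (use assms in auto)
  then show ?thesis unfolding Rf_def image_image by simp
qed

lemma disj_lt: assumes "A \<subseteq> {..<n}" "B \<subseteq> {n<..m}" shows "A \<inter> B = ({}::nat set)"
proof (rule equals0I)
  fix x assume "x \<in> A \<inter> B"
  then have "x < n" "n < x" using assms by auto
  then show False by simp
qed

lemma R_Un: "Rf n (A \<union> B) = Rf n A \<union> Rf n B" unfolding Rf_def by auto
lemma R_ins: "Rf n (insert n A) = insert n (Rf n A)" unfolding Rf_def by auto

lemma fin_lt: "U \<subseteq> {..<(n::nat)} \<Longrightarrow> finite U" using finite_subset by blast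

lemma indep_Phi0: "U \<subseteq> {..<n} \<Longrightarrow> indep U \<Longrightarrow> indep (U \<union> Rf n U)"
  unfolding indep_def Rf_def
proof (intro ballI)
  fix c assume U: "U \<subseteq> {..<n}" and i: "\<forall>c\<in>U. Suc c \<notin> U" and c: "c \<in> U \<union> (\<lambda>c. 2 * n - c) ` U"
  show "Suc c \<notin> U \<union> (\<lambda>c. 2 * n - c) ` U"
  proof
    assume s: "Suc c \<in> U \<union> (\<lambda>c. 2 * n - c) ` U"
    from c show False
    proof
      assume cU: "c \<in> U"
      from s show False
      proof
        assume "Suc c \<in> U" then show False using i cU by blast
      next
        assume "Suc c \<in> (\<lambda>c. 2 * n - c) ` U"
        then obtain x where x: "x \<in> U" "Suc c = 2*n - x" by auto
        have "x < n" "c < n" using U x cU by auto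
        then show False using x by linarith
      qed
    next
      assume "c \<in> (\<lambda>c. 2 * n - c) ` U"
      then obtain x where x: "x \<in> U" "c = 2*n - x" by auto
      from s show False
      proof
        assume "Suc c \<in> U"
        then have "x < n" "Suc c < n" using U x by auto
        then show False using x by linarith
      next
        assume "Suc c \<in> (\<lambda>c. 2 * n - c) ` U"
        then obtain y where y: "y \<in> U" "Suc c = 2*n - y" by auto
        then have "Suc y = x" using x U by auto
        then show False using i y x by auto
      qed
    qed
  qed
qed

lemma indep_Phi1: "U \<subseteq> {..<n-1} \<Longrightarrow> indep U \<Longrightarrow> indep (insert n (U \<union> Rf n U))"
proof -
  assume U: "U \<subseteq> {..<n-1}" and i: "indep U"
  have U': "U \<subseteq> {..<n}" using U by auto
  have i2: "indep (U \<union> Rf n U)" by (rule indep_Phi0[OF U' i])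
  have a: "Suc n \<notin> Rf n U" using U unfolding Rf_def by auto
  have b: "n \<notin> U \<union> Rf n U" using U' R_sub[OF U'] by auto
  have c: "\<And>c. c \<in> U \<union> Rf n U \<Longrightarrow> Suc c \<noteq> n" using U R_sub[OF U'] by auto
  show ?thesis using i2 a b c U' unfolding indep_def by auto
qed

lemma ev_Phi0: "U \<subseteq> {..<n} \<Longrightarrow> ev (U \<union> Rf n U) = 2 * ev U \<and> od (U \<union> Rf n U) = 2 * od U"
proof -
  assume U: "U \<subseteq> {..<n}"
  have f: "finite U" "finite (Rf n U)" using fin_lt[OF U] unfolding Rf_def by auto
  have d: "U \<inter> Rf n U = {}" by (rule disj_lt[OF U R_sub[OF U]])
  have U2: "U \<subseteq> {..2*n}" using U by auto
  show ?thesis using ev_Un[OF f d] od_Un[OF f d] ev_R[OF U2] od_R[OF U2] by simp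
qed

lemma ev_Phi1: "U \<subseteq> {..<n} \<Longrightarrow> ev (insert n (U \<union> Rf n U)) = 2 * ev U + (if even n then 1 else 0)
    \<and> od (insert n (U \<union> Rf n U)) = 2 * od U + (if odd n then 1 else 0)"
proof -
  assume U: "U \<subseteq> {..<n}"
  have f: "finite (U \<union> Rf n U)" using fin_lt[OF U] unfolding Rf_def by auto
  have b: "n \<notin> U \<union> Rf n U" using U R_sub[OF U] by auto
  show ?thesis using ev_insert[OF f b] od_insert[OF f b] ev_Phi0[OF U] by simp
qed

lemma sym_decomp: "S \<subseteq> {..2*n} \<Longrightarrow> Rf n S = S \<Longrightarrow>
    S = (if n \<in> S then insert n (S \<inter> {..<n} \<union> Rf n (S \<inter> {..<n})) else S \<inter> {..<n} \<union> Rf n (S \<inter> {..<n}))"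
proof -
  assume S: "S \<subseteq> {..2*n}" and R: "Rf n S = S"
  have mem: "\<And>c. c \<in> S \<Longrightarrow> 2*n - c \<in> S" using R unfolding Rf_def by auto
  have "S \<subseteq> insert n (S \<inter> {..<n} \<union> Rf n (S \<inter> {..<n}))"
  proof
    fix c assume c: "c \<in> S"
    show "c \<in> insert n (S \<inter> {..<n} \<union> Rf n (S \<inter> {..<n}))"
    proof (cases "c < n")
      case True then show ?thesis using c by auto
    next
      case False
      show ?thesis
      proof (cases "c = n")
        case True then show ?thesis by auto
      next
        case False
        then have "c > n" using \<open>\<not> c < n\<close> by auto
        then have "2*n - c \<in> S \<inter> {..<n}" "c = 2*n - (2*n - c)" using mem[OF c] c S by auto
        then show ?thesis unfolding Rf_def by blast
      qed
    qed
  qed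
  moreover have "Rf n (S \<inter> {..<n}) \<subseteq> S" using R unfolding Rf_def by auto
  ultimately show ?thesis by auto
qed

lemma cut1: "U \<subseteq> {..<n} \<Longrightarrow> insert n (U \<union> Rf n U) \<inter> {..<n} = U"
proof -
  assume U: "U \<subseteq> {..<n}"
  have "Rf n U \<inter> {..<n} = {}" using disj_lt[OF _ R_sub[OF U], of "{..<n}"] by blast
  then show ?thesis using U by blast
qed

lemma cut0: "U \<subseteq> {..<n} \<Longrightarrow> (U \<union> Rf n U) \<inter> {..<n} = U"
proof -
  assume U: "U \<subseteq> {..<n}"
  have "Rf n U \<inter> {..<n} = {}" using disj_lt[OF _ R_sub[OF U], of "{..<n}"] by blast
  then show ?thesis using U by blast
qed

lemma card_A0: "card {S \<in> IS (2*n+1) r p. Rf n S = S \<and> n \<notin> S}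
    = (if even r \<and> even p then card (IS n (r div 2) (p div 2)) else 0)"
proof -
  let ?D = "{U \<in> IS n (r div 2) (p div 2). even r \<and> even p}"
  let ?f = "\<lambda>U. U \<union> Rf n U"
  have eq: "{S \<in> IS (2*n+1) r p. Rf n S = S \<and> n \<notin> S} = ?f ` ?D"
  proof
    show "{S \<in> IS (2*n+1) r p. Rf n S = S \<and> n \<notin> S} \<subseteq> ?f ` ?D"
    proof
      fix S assume S: "S \<in> {S \<in> IS (2*n+1) r p. Rf n S = S \<and> n \<notin> S}"
      let ?U = "S \<inter> {..<n}"
      have S2: "S \<subseteq> {..2*n}" using S by (auto simp: IS_def)
      have RS: "Rf n S = S" and nS: "n \<notin> S" using S by auto
      have Seq: "S = ?f ?U" using sym_decomp[OF S2 RS] unfolding if_not_P[OF nS] .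
      have U: "?U \<subseteq> {..<n}" by auto
      have "indep ?U" using S by (auto simp: IS_def indep_def)
      moreover have "ev S = 2 * ev ?U" "od S = 2 * od ?U" using ev_Phi0[OF U] unfolding Seq[symmetric] by simp_all
      moreover have "ev S = r" "od S = p" using S by (auto simp: IS_def)
      ultimately have "even r" "even p" "ev ?U = r div 2" "od ?U = p div 2" "indep ?U" by auto
      then have "?U \<in> ?D" using U by (auto simp: IS_def)
      then show "S \<in> ?f ` ?D" using Seq by blast
    qed
  next
    show "?f ` ?D \<subseteq> {S \<in> IS (2*n+1) r p. Rf n S = S \<and> n \<notin> S}"
    proof
      fix S assume "S \<in> ?f ` ?D"
      then obtain U where U: "U \<in> ?D" and S: "S = ?f U" by auto
      have Ul: "U \<subseteq> {..<n}" using U by (auto simp: IS_def)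
      have U2: "U \<subseteq> {..2*n}" using Ul by auto
      have "S \<subseteq> {..<2*n+1}" using S Ul R_sub[OF Ul] by auto
      moreover have "indep S" using S indep_Phi0[OF Ul] U by (auto simp: IS_def)
      moreover have "ev S = r" "od S = p" using ev_Phi0[OF Ul] S U by (auto simp: IS_def)
      moreover have "Rf n S = S" using S RR[OF U2] R_Un by auto
      moreover have "n \<notin> S" using S Ul R_sub[OF Ul] by auto
      ultimately show "S \<in> {S \<in> IS (2*n+1) r p. Rf n S = S \<and> n \<notin> S}" by (auto simp: IS_def)
    qed
  qed
  have inj: "inj_on ?f ?D"
  proof (rule inj_onI)
    fix U V assume U: "U \<in> ?D" and V: "V \<in> ?D" and e: "?f U = ?f V"
    have Ul: "U \<subseteq> {..<n}" "V \<subseteq> {..<n}" using U V by (auto simp: IS_def)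
    have "?f U \<inter> {..<n} = U" "?f V \<inter> {..<n} = V" using cut0 Ul by blast+
    then show "U = V" using e by metis
  qed
  have "card {S \<in> IS (2*n+1) r p. Rf n S = S \<and> n \<notin> S} = card ?D"
    unfolding eq by (rule card_image[OF inj])
  then show ?thesis by auto
qed

lemma card_A1: "card {S \<in> IS (2*n+1) r p. Rf n S = S \<and> n \<in> S}
    = (if (if even n then odd r \<and> even p else even r \<and> odd p) then card (IS (n-1) (r div 2) (p div 2)) else 0)"
proof -
  let ?c = "if even n then odd r \<and> even p else even r \<and> odd p"
  let ?D = "{U \<in> IS (n-1) (r div 2) (p div 2). ?c}"
  let ?f = "\<lambda>U. insert n (U \<union> Rf n U)"
  have eq: "{S \<in> IS (2*n+1) r p. Rf n S = S \<and> n \<in> S} = ?f ` ?D"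
  proof
    show "{S \<in> IS (2*n+1) r p. Rf n S = S \<and> n \<in> S} \<subseteq> ?f ` ?D"
    proof
      fix S assume S: "S \<in> {S \<in> IS (2*n+1) r p. Rf n S = S \<and> n \<in> S}"
      let ?U = "S \<inter> {..<n}"
      have S2: "S \<subseteq> {..2*n}" using S by (auto simp: IS_def)
      have RS: "Rf n S = S" and nS: "n \<in> S" using S by auto
      have Seq: "S = ?f ?U" using sym_decomp[OF S2 RS] unfolding if_P[OF nS] .
      have U: "?U \<subseteq> {..<n}" by auto
      have U1: "?U \<subseteq> {..<n-1}"
      proof
        fix c assume c: "c \<in> ?U"
        have "Suc c \<noteq> n" using c S by (auto simp: IS_def indep_def)
        then show "c \<in> {..<n-1}" using c by auto
      qed
      have "indep ?U" using S by (auto simp: IS_def indep_def)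
      moreover have "ev S = 2 * ev ?U + (if even n then 1 else 0)" "od S = 2 * od ?U + (if odd n then 1 else 0)"
        using ev_Phi1[OF U] unfolding Seq[symmetric] by simp_all
      moreover have "ev S = r" "od S = p" using S by (auto simp: IS_def)
      ultimately have e1: "r = 2 * ev ?U + (if even n then 1 else 0)" "p = 2 * od ?U + (if odd n then 1 else 0)" "indep ?U"
        by simp_all
      have "?c \<and> ev ?U = r div 2 \<and> od ?U = p div 2"
      proof (cases "even n")
        case True
        then have "r = 2 * ev ?U + 1" "p = 2 * od ?U" using e1 by simp_all
        then show ?thesis using True by simp
      next
        case False
        then have "r = 2 * ev ?U" "p = 2 * od ?U + 1" using e1 by simp_all
        then show ?thesis using False by simp
      qed
      then have "?U \<in> ?D" using U1 e1(3) by (simp add: IS_def)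
      then show "S \<in> ?f ` ?D" using Seq by blast
    qed
  next
    show "?f ` ?D \<subseteq> {S \<in> IS (2*n+1) r p. Rf n S = S \<and> n \<in> S}"
    proof
      fix S assume "S \<in> ?f ` ?D"
      then obtain U where U: "U \<in> ?D" and S: "S = ?f U" by auto
      have U1: "U \<subseteq> {..<n-1}" using U by (auto simp: IS_def)
      have Ul: "U \<subseteq> {..<n}" using U1 by auto
      have U2: "U \<subseteq> {..2*n}" using Ul by auto
      have "S \<subseteq> {..<2*n+1}" using S Ul R_sub[OF Ul] by auto
      moreover have "indep S" using S indep_Phi1[OF U1] U by (auto simp: IS_def)
      moreover have "ev S = r" "od S = p"
      proof -
        have c: "?c" and e: "ev U = r div 2" "od U = p div 2" using U by (auto simp: IS_def)
        have "ev S = 2 * ev U + (if even n then 1 else 0)" "od S = 2 * od U + (if odd n then 1 else 0)"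
          using ev_Phi1[OF Ul] S by simp_all
        moreover have "r = 2 * (r div 2) + (if even n then 1 else 0)" "p = 2 * (p div 2) + (if odd n then 1 else 0)"
          using c by (cases "even n"; presburger)+
        ultimately show "ev S = r" "od S = p" using e by simp_all
      qed
      moreover have "Rf n S = S" using S RR[OF U2] R_Un R_ins by auto
      ultimately show "S \<in> {S \<in> IS (2*n+1) r p. Rf n S = S \<and> n \<in> S}" using S by (auto simp: IS_def)
    qed
  qed
  have inj: "inj_on ?f ?D"
  proof (rule inj_onI)
    fix U V assume U: "U \<in> ?D" and V: "V \<in> ?D" and e: "?f U = ?f V"
    have Ul: "U \<subseteq> {..<n}" "V \<subseteq> {..<n}" using U V by (auto simp: IS_def)
    have "?f U \<inter> {..<n} = U" "?f V \<inter> {..<n} = V" using cut1 Ul by blast+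
    then show "U = V" using e by metis
  qed
  have "card {S \<in> IS (2*n+1) r p. Rf n S = S \<and> n \<in> S} = card ?D"
    unfolding eq by (rule card_image[OF inj])
  then show ?thesis by auto
qed


lemma card_IS_K: "int (card (IS L e d)) = poly (K L e d) 1"
proof -
  have "poly (H L e d) 1 = (\<Sum>S\<in>IS L e d. 1)" by (simp add: H_def poly_sum poly_monom)
  then show ?thesis using H_K[of L e d] by simp
qed

lemma K_at1: "L + 1 = 2*(e+d) + m \<Longrightarrow> poly (K L e d) 1 = poly (msp (m div 2 + 1) e) 1 * poly (msp ((m+1) div 2) d) 1"
  using K_eq[of "e+d" e d L m "m div 2 + 1" "(m+1) div 2"] by (simp add: poly_monom)

lemma qm1:
  assumes h: "p + r \<le> n"
  shows "poly (qbinom (n-r) p * qbinom (n+1-p) r) (-1) = int (card {S \<in> IS (2*n+1) r p. Rf n S = S})"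
proof -
  define u where "u = n - (p+r)"
  have nu: "n = u + p + r" using h by (simp add: u_def)
  have L: "poly (qbinom (n-r) p * qbinom (n+1-p) r) (-1) = poly (msp (u+1) p) (-1) * poly (msp (u+2) r) (-1)"
    using X_msp[OF h] nu by simp
  have C: "card {S \<in> IS (2*n+1) r p. Rf n S = S} = card {S \<in> IS (2*n+1) r p. Rf n S = S \<and> n \<notin> S} + card {S \<in> IS (2*n+1) r p. Rf n S = S \<and> n \<in> S}"
  proof -
    have "{S \<in> IS (2*n+1) r p. Rf n S = S} = {S \<in> IS (2*n+1) r p. Rf n S = S \<and> n \<notin> S} \<union> {S \<in> IS (2*n+1) r p. Rf n S = S \<and> n \<in> S}" by auto
    moreover have "finite {S \<in> IS (2*n+1) r p. Rf n S = S \<and> n \<notin> S}" "finite {S \<in> IS (2*n+1) r p. Rf n S = S \<and> n \<in> S}"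
      using IS_finite by auto
    ultimately show ?thesis by (simp add: card_Un_disjoint disjoint_iff)
  qed
  have m1a: "poly (msp (u+1) p) (-1) = (if even (u+1) \<and> odd p then 0 else poly (msp ((u+1+1) div 2) (p div 2)) 1)"
    by (rule msp_m1)
  have m1b: "poly (msp (u+2) r) (-1) = (if even (u+2) \<and> odd r then 0 else poly (msp ((u+2+1) div 2) (r div 2)) 1)"
    by (rule msp_m1)
  have s: "(u+1) div 2 + 1 = (u+2+1) div 2" "(u+1+1) div 2 = (u+1+1) div 2" by presburger+
  consider (EE) "even r" "even p" | (OO) "odd r" "odd p" | (OE) "odd r" "even p" | (EO) "even r" "odd p" by blast
  then show ?thesis
  proof cases
    case EE
    have A1: "card {S \<in> IS (2*n+1) r p. Rf n S = S \<and> n \<in> S} = 0" using card_A1[of n r p] EE by simp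
    have A0: "int (card {S \<in> IS (2*n+1) r p. Rf n S = S \<and> n \<notin> S}) = poly (K n (r div 2) (p div 2)) 1"
      using card_A0[of n r p] EE card_IS_K by simp
    have K: "poly (K n (r div 2) (p div 2)) 1 = poly (msp ((u+1) div 2 + 1) (r div 2)) 1 * poly (msp ((u+1+1) div 2) (p div 2)) 1"
      by (rule K_at1) (use nu EE in presburger)
    show ?thesis unfolding L C using A0 A1 K m1a m1b EE s by simp
  next
    case OO
    have A1: "card {S \<in> IS (2*n+1) r p. Rf n S = S \<and> n \<in> S} = 0" using card_A1[of n r p] OO by simp
    have A0: "card {S \<in> IS (2*n+1) r p. Rf n S = S \<and> n \<notin> S} = 0" using card_A0[of n r p] OO by simp
    have "(even (u+1) \<and> odd p) \<or> (even (u+2) \<and> odd r)" using OO by presburger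
    then show ?thesis unfolding L C using A0 A1 m1a m1b by auto
  next
    case OE
    show ?thesis
    proof (cases "even n")
      case True
      have A0: "card {S \<in> IS (2*n+1) r p. Rf n S = S \<and> n \<notin> S} = 0" using card_A0[of n r p] OE by simp
      have A1: "int (card {S \<in> IS (2*n+1) r p. Rf n S = S \<and> n \<in> S}) = poly (K (n-1) (r div 2) (p div 2)) 1"
        using card_A1[of n r p] OE True card_IS_K by simp
      have K: "poly (K (n-1) (r div 2) (p div 2)) 1 = poly (msp ((u+1) div 2 + 1) (r div 2)) 1 * poly (msp ((u+1+1) div 2) (p div 2)) 1"
        by (rule K_at1) (use nu OE in presburger)
      have "odd (u+2)" using nu OE True by presburger
      then show ?thesis unfolding L C using A0 A1 K m1a m1b OE s by simp
    next
      case False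
      have A0: "card {S \<in> IS (2*n+1) r p. Rf n S = S \<and> n \<notin> S} = 0" using card_A0[of n r p] OE by simp
      have A1: "card {S \<in> IS (2*n+1) r p. Rf n S = S \<and> n \<in> S} = 0" using card_A1[of n r p] OE False by simp
      have "even (u+2)" using nu OE False by presburger
      then show ?thesis unfolding L C using A0 A1 m1a m1b OE by simp
    qed
  next
    case EO
    show ?thesis
    proof (cases "even n")
      case False
      have A0: "card {S \<in> IS (2*n+1) r p. Rf n S = S \<and> n \<notin> S} = 0" using card_A0[of n r p] EO by simp
      have A1: "int (card {S \<in> IS (2*n+1) r p. Rf n S = S \<and> n \<in> S}) = poly (K (n-1) (r div 2) (p div 2)) 1"
        using card_A1[of n r p] EO False card_IS_K by simp
      have K: "poly (K (n-1) (r div 2) (p div 2)) 1 = poly (msp ((u+1) div 2 + 1) (r div 2)) 1 * poly (msp ((u+1+1) div 2) (p div 2)) 1"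
        by (rule K_at1) (use nu EO in presburger)
      have "odd (u+1)" using nu EO False by presburger
      then show ?thesis unfolding L C using A0 A1 K m1a m1b EO s by simp
    next
      case True
      have A0: "card {S \<in> IS (2*n+1) r p. Rf n S = S \<and> n \<notin> S} = 0" using card_A0[of n r p] EO by simp
      have A1: "card {S \<in> IS (2*n+1) r p. Rf n S = S \<and> n \<in> S} = 0" using card_A1[of n r p] EO True by simp
      have "even (u+1)" using nu EO True by presburger
      then show ?thesis unfolding L C using A0 A1 m1a m1b EO by simp
    qed
  qed
qed


definition hz :: "nat \<Rightarrow> nat \<Rightarrow> edge" where "hz x y = {(x,y),(x+1,y)}"
definition vt :: "nat \<Rightarrow> edge" where "vt x = {(x,0),(x,1)}"

lemma mem_hz: "(a,b) \<in> hz x y \<longleftrightarrow> b = y \<and> (a = x \<or> a = Suc x)"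
  by (auto simp: hz_def)
lemma mem_vt: "(a,b) \<in> vt x \<longleftrightarrow> a = x \<and> (b = 0 \<or> b = 1)"
  by (auto simp: vt_def)
lemma hz_eq: "hz a y = hz b y' \<longleftrightarrow> a = b \<and> y = y'"
  by (auto simp: hz_def doubleton_eq_iff)
lemma hz_vt: "hz a y \<noteq> vt b"
  by (auto simp: hz_def vt_def doubleton_eq_iff)
lemma vt_eq: "vt a = vt b \<longleftrightarrow> a = b"
  by (auto simp: vt_def doubleton_eq_iff)

lemma edges_alt: "edges n = {hz x y | x y. x < 2*n+1 \<and> y \<le> 1} \<union> {vt x | x. x \<le> 2*n+1}"
  unfolding edges_def hz_def vt_def by auto

lemma verts_iff: "(x,y) \<in> verts n \<longleftrightarrow> x \<le> 2*n+1 \<and> y \<le> 1"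
  by (auto simp: verts_def)

definition TS :: "nat \<Rightarrow> edge set \<Rightarrow> nat set" where
  "TS n P = {c. c < 2*n+1 \<and> hz c 1 \<in> P}"

definition VS :: "nat \<Rightarrow> nat set \<Rightarrow> nat set" where
  "VS n S = {x. x \<le> 2*n+1 \<and> x \<notin> S \<and> x \<notin> Suc ` S}"

definition build :: "nat \<Rightarrow> nat set \<Rightarrow> edge set" where
  "build n S = (\<lambda>c. hz c 1) ` S \<union> (\<lambda>c. hz c 0) ` S \<union> vt ` VS n S"

context
  fixes n P assumes pm: "perfect_matching n P"
begin

lemma pm_sub: "P \<subseteq> edges n" using pm by (simp add: perfect_matching_def)

lemma pm_uniq: "v \<in> verts n \<Longrightarrow> e1 \<in> P \<Longrightarrow> e2 \<in> P \<Longrightarrow> v \<in> e1 \<Longrightarrow> v \<in> e2 \<Longrightarrow> e1 = e2"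
  using pm unfolding perfect_matching_def by blast

lemma pm_ex: "v \<in> verts n \<Longrightarrow> \<exists>e\<in>P. v \<in> e"
  using pm unfolding perfect_matching_def by blast

lemma pm_edge: "e \<in> P \<Longrightarrow> (\<exists>x y. x < 2*n+1 \<and> y \<le> 1 \<and> e = hz x y) \<or> (\<exists>x. x \<le> 2*n+1 \<and> e = vt x)"
  using pm_sub edges_alt by blast

lemma cover_cases:
  assumes "x \<le> 2*n+1" "y \<le> 1"
  obtains "hz x y \<in> P" "x < 2*n+1" | "x \<ge> 1" "hz (x-1) y \<in> P" | "vt x \<in> P"
proof -
  have v: "(x,y) \<in> verts n" using assms by (simp add: verts_iff)
  obtain e where e: "e \<in> P" "(x,y) \<in> e" using pm_ex[OF v] by blast
  from pm_edge[OF e(1)] show ?thesis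
  proof
    assume "\<exists>a b. a < 2*n+1 \<and> b \<le> 1 \<and> e = hz a b"
    then obtain a b where ab: "a < 2*n+1" "e = hz a b" by blast
    then have "b = y" "x = a \<or> x = Suc a" using e by (auto simp: mem_hz)
    then show ?thesis using that e ab by (cases "x = a") auto
  next
    assume "\<exists>a. a \<le> 2*n+1 \<and> e = vt a"
    then obtain a where "e = vt a" by blast
    then have "e = vt x" using e by (auto simp: mem_vt)
    then show ?thesis using that e by auto
  qed
qed

lemma top_bot: "c < 2*n+1 \<Longrightarrow> hz c 1 \<in> P \<longleftrightarrow> hz c 0 \<in> P"
proof (induction c rule: less_induct)
  case (less c)
  have c1: "(c,1) \<in> verts n" "(c,0) \<in> verts n" using less.prems by (auto simp: verts_iff)
  show ?case
  proof
    assume t: "hz c 1 \<in> P"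
    show "hz c 0 \<in> P"
    proof (rule cover_cases[of c 0])
      show "c \<le> 2*n+1" "0 \<le> (1::nat)" using less.prems by auto
    next
      assume "hz c 0 \<in> P" then show ?thesis .
    next
      assume a: "c \<ge> 1" "hz (c-1) 0 \<in> P"
      then have "hz (c-1) 1 \<in> P" using less.IH[of "c-1"] less.prems by auto
      moreover have "(c,1) \<in> hz (c-1) 1" "(c,1) \<in> hz c 1" using a by (auto simp: mem_hz)
      ultimately have "hz (c-1) 1 = hz c 1" using pm_uniq[OF c1(1) _ t] by blast
      then show ?thesis using a by (simp add: hz_eq)
    next
      assume "vt c \<in> P"
      moreover have "(c,1) \<in> vt c" "(c,1) \<in> hz c 1" by (auto simp: mem_vt mem_hz)
      ultimately have "vt c = hz c 1" using pm_uniq[OF c1(1) _ t] by blast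
      then show ?thesis using hz_vt by metis
    qed
  next
    assume t: "hz c 0 \<in> P"
    show "hz c 1 \<in> P"
    proof (rule cover_cases[of c 1])
      show "c \<le> 2*n+1" "1 \<le> (1::nat)" using less.prems by auto
    next
      assume "hz c 1 \<in> P" then show ?thesis .
    next
      assume a: "c \<ge> 1" "hz (c-1) 1 \<in> P"
      then have "hz (c-1) 0 \<in> P" using less.IH[of "c-1"] less.prems by auto
      moreover have "(c,0) \<in> hz (c-1) 0" "(c,0) \<in> hz c 0" using a by (auto simp: mem_hz)
      ultimately have "hz (c-1) 0 = hz c 0" using pm_uniq[OF c1(2) _ t] by blast
      then show ?thesis using a by (simp add: hz_eq)
    next
      assume "vt c \<in> P"
      moreover have "(c,0) \<in> vt c" "(c,0) \<in> hz c 0" by (auto simp: mem_vt mem_hz)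
      ultimately have "vt c = hz c 0" using pm_uniq[OF c1(2) _ t] by blast
      then show ?thesis using hz_vt by metis
    qed
  qed
qed

lemma TS_indep: "indep (TS n P)"
  unfolding indep_def
proof
  fix c assume c: "c \<in> TS n P"
  show "Suc c \<notin> TS n P"
  proof
    assume s: "Suc c \<in> TS n P"
    have v: "(Suc c, 1) \<in> verts n" using s by (auto simp: TS_def verts_iff)
    have "hz c 1 \<in> P" "hz (Suc c) 1 \<in> P" using c s by (auto simp: TS_def)
    moreover have "(Suc c, 1) \<in> hz c 1" "(Suc c, 1) \<in> hz (Suc c) 1" by (auto simp: mem_hz)
    ultimately have "hz c 1 = hz (Suc c) 1" using pm_uniq[OF v] by blast
    then show False by (simp add: hz_eq)
  qed
qed

lemma TS_sub: "TS n P \<subseteq> {..<2*n+1}" by (auto simp: TS_def)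

lemma P_build: "P = build n (TS n P)"
proof
  show "P \<subseteq> build n (TS n P)"
  proof
    fix e assume e: "e \<in> P"
    from pm_edge[OF e] show "e \<in> build n (TS n P)"
    proof
      assume "\<exists>x y. x < 2*n+1 \<and> y \<le> 1 \<and> e = hz x y"
      then obtain x y where xy: "x < 2*n+1" "y \<le> 1" "e = hz x y" by blast
      then have "y = 0 \<or> y = 1" by auto
      then have "x \<in> TS n P \<and> (e = hz x 1 \<or> e = hz x 0)" using top_bot[OF xy(1)] e xy by (auto simp: TS_def)
      then show ?thesis unfolding build_def by blast
    next
      assume "\<exists>x. x \<le> 2*n+1 \<and> e = vt x"
      then obtain x where x: "x \<le> 2*n+1" "e = vt x" by blast
      have v: "(x,1) \<in> verts n" using x by (simp add: verts_iff)
      have "x \<notin> TS n P"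
      proof
        assume "x \<in> TS n P"
        then have "hz x 1 \<in> P" by (simp add: TS_def)
        moreover have "(x,1) \<in> hz x 1" "(x,1) \<in> vt x" by (auto simp: mem_hz mem_vt)
        ultimately have "hz x 1 = vt x" using pm_uniq[OF v] e x by blast
        then show False using hz_vt by metis
      qed
      moreover have "x \<notin> Suc ` TS n P"
      proof
        assume "x \<in> Suc ` TS n P"
        then obtain c where c: "c \<in> TS n P" "x = Suc c" by blast
        then have "hz c 1 \<in> P" by (simp add: TS_def)
        moreover have "(x,1) \<in> hz c 1" "(x,1) \<in> vt x" using c by (auto simp: mem_hz mem_vt)
        ultimately have "hz c 1 = vt x" using pm_uniq[OF v] e x by blast
        then show False using hz_vt by metis
      qed
      ultimately have "x \<in> VS n (TS n P)" using x by (simp add: VS_def)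
      then show ?thesis using x unfolding build_def by blast
    qed
  qed
next
  show "build n (TS n P) \<subseteq> P"
  proof
    fix e assume "e \<in> build n (TS n P)"
    then consider (a) c where "c \<in> TS n P" "e = hz c 1" | (b) c where "c \<in> TS n P" "e = hz c 0"
      | (c) x where "x \<in> VS n (TS n P)" "e = vt x"
      unfolding build_def by blast
    then show "e \<in> P"
    proof cases
      case a then show ?thesis by (simp add: TS_def)
    next
      case b
      then have "c < 2*n+1" "hz c 1 \<in> P" by (auto simp: TS_def)
      then show ?thesis using top_bot b by blast
    next
      case c
      have x: "x \<le> 2*n+1" "x \<notin> TS n P" "x \<notin> Suc ` TS n P" using c by (auto simp: VS_def)
      show ?thesis
      proof (rule cover_cases[of x 1])
        show "x \<le> 2*n+1" "1 \<le> (1::nat)" using x by auto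
      next
        assume "hz x 1 \<in> P" "x < 2*n+1"
        then have "x \<in> TS n P" by (simp add: TS_def)
        then show ?thesis using x by simp
      next
        assume a: "x \<ge> 1" "hz (x-1) 1 \<in> P"
        then have "x - 1 \<in> TS n P" using x by (simp add: TS_def)
        then have "Suc (x-1) \<in> Suc ` TS n P" by blast
        then show ?thesis using a x by simp
      next
        assume "vt x \<in> P" then show ?thesis using c by simp
      qed
    qed
  qed
qed

end

lemma build_pm:
  assumes S: "S \<subseteq> {..<2*n+1}" and i: "indep S"
  shows "perfect_matching n (build n S)"
  unfolding perfect_matching_def
proof
  show "build n S \<subseteq> edges n"
    unfolding build_def edges_alt using S by (auto simp: VS_def)
next
  show "\<forall>v\<in>verts n. \<exists>!e. e \<in> build n S \<and> v \<in> e"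
  proof
    fix v assume "v \<in> verts n"
    then obtain x y where v: "v = (x,y)" "x \<le> 2*n+1" "y \<le> 1" by (cases v) (auto simp: verts_iff)
    have mem: "\<And>e. e \<in> build n S \<Longrightarrow> v \<in> e \<Longrightarrow>
        (x \<in> S \<and> e = hz x y) \<or> (x \<ge> 1 \<and> x - 1 \<in> S \<and> e = hz (x-1) y) \<or> (x \<in> VS n S \<and> e = vt x)"
    proof -
      fix e assume e: "e \<in> build n S" "v \<in> e"
      then consider (a) c where "c \<in> S" "e = hz c 1" | (b) c where "c \<in> S" "e = hz c 0"
        | (c) z where "z \<in> VS n S" "e = vt z"
        unfolding build_def by blast
      then show "(x \<in> S \<and> e = hz x y) \<or> (x \<ge> 1 \<and> x - 1 \<in> S \<and> e = hz (x-1) y) \<or> (x \<in> VS n S \<and> e = vt x)"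
      proof cases
        case a then show ?thesis using e v by (auto simp: mem_hz)
      next
        case b then show ?thesis using e v by (auto simp: mem_hz)
      next
        case c then show ?thesis using e v by (auto simp: mem_vt)
      qed
    qed
    have ex: "\<exists>e. e \<in> build n S \<and> v \<in> e"
    proof (cases "x \<in> S")
      case True
      have "y = 0 \<or> y = 1" using v(3) by auto
      then have "hz x y \<in> build n S" using True unfolding build_def by blast
      then show ?thesis using v by (auto simp: mem_hz)
    next
      case False
      show ?thesis
      proof (cases "x \<in> Suc ` S")
        case True
        then obtain c where c: "c \<in> S" "x = Suc c" by blast
        have "y = 0 \<or> y = 1" using v(3) by auto
        then have "hz c y \<in> build n S" using c unfolding build_def by blast
        then show ?thesis using v c by (auto simp: mem_hz)
      next
        case F2: False
        have "vt x \<in> build n S" using False F2 v unfolding build_def VS_def by auto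
        moreover have "(x,y) \<in> vt x" using v(3) unfolding mem_vt by linarith
        ultimately show ?thesis using v by blast
      qed
    qed
    have un: "\<And>e1 e2. e1 \<in> build n S \<Longrightarrow> v \<in> e1 \<Longrightarrow> e2 \<in> build n S \<Longrightarrow> v \<in> e2 \<Longrightarrow> e1 = e2"
    proof -
      fix e1 e2 assume 1: "e1 \<in> build n S" "v \<in> e1" and 2: "e2 \<in> build n S" "v \<in> e2"
      have nb: "\<not> (x \<in> S \<and> x \<ge> 1 \<and> x - 1 \<in> S)"
      proof
        assume h: "x \<in> S \<and> x \<ge> 1 \<and> x - 1 \<in> S"
        then have "Suc (x-1) \<in> S" by simp
        then show False using i h unfolding indep_def by blast
      qed
      have vs1: "x \<in> VS n S \<Longrightarrow> x \<notin> S" by (simp add: VS_def)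
      have vs2: "x \<in> VS n S \<Longrightarrow> x \<ge> 1 \<Longrightarrow> x - 1 \<notin> S"
      proof
        assume a: "x \<in> VS n S" "x \<ge> 1" "x - 1 \<in> S"
        have "Suc (x-1) \<in> Suc ` S" using a(3) by (rule imageI)
        moreover have "x \<notin> Suc ` S" using a(1) by (simp add: VS_def)
        ultimately show False using a(2) by simp
      qed
      show "e1 = e2" using mem[OF 1] mem[OF 2] nb vs1 vs2 by auto
    qed
    show "\<exists>!e. e \<in> build n S \<and> v \<in> e" using ex un by blast
  qed
qed

lemma TS_build: "S \<subseteq> {..<2*n+1} \<Longrightarrow> TS n (build n S) = S"
  unfolding TS_def build_def by (auto simp: hz_eq hz_vt hz_vt[symmetric])


lemma refl_hz: "c \<le> 2*n \<Longrightarrow> reflect_edge n (hz c y) = hz (2*n - c) y"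
  unfolding reflect_edge_def hz_def by (auto simp: Suc_diff_le)

lemma refl_vt: "reflect_edge n (vt x) = vt (2*n+1 - x)"
  unfolding reflect_edge_def vt_def by auto

lemma VS_R:
  assumes S: "S \<subseteq> {..<2*n+1}"
  shows "VS n (Rf n S) = (\<lambda>x. 2*n+1 - x) ` VS n S"
proof
  show "VS n (Rf n S) \<subseteq> (\<lambda>x. 2*n+1 - x) ` VS n S"
  proof
    fix z assume z: "z \<in> VS n (Rf n S)"
    have z1: "z \<le> 2*n+1" "z \<notin> Rf n S" "z \<notin> Suc ` Rf n S" using z by (auto simp: VS_def)
    let ?x = "2*n+1 - z"
    have "?x \<notin> S"
    proof
      assume "?x \<in> S"
      then have "2*n - ?x \<in> Rf n S" "?x \<le> 2*n" using S by (auto simp: Rf_def)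
      then have "Suc (2*n - ?x) \<in> Suc ` Rf n S" by blast
      moreover have "Suc (2*n - ?x) = z" using \<open>?x \<le> 2*n\<close> z1 by simp
      ultimately show False using z1 by simp
    qed
    moreover have "?x \<notin> Suc ` S"
    proof
      assume "?x \<in> Suc ` S"
      then obtain c where c: "c \<in> S" "?x = Suc c" by blast
      then have "2*n - c \<in> Rf n S" by (auto simp: Rf_def)
      moreover have "2*n - c = z" using c z1 by simp
      ultimately show False using z1 by simp
    qed
    ultimately have "?x \<in> VS n S" by (simp add: VS_def)
    moreover have "z = 2*n+1 - ?x" using z1 by simp
    ultimately show "z \<in> (\<lambda>x. 2*n+1 - x) ` VS n S" by blast
  qed
next
  show "(\<lambda>x. 2*n+1 - x) ` VS n S \<subseteq> VS n (Rf n S)"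
  proof
    fix z assume "z \<in> (\<lambda>x. 2*n+1 - x) ` VS n S"
    then obtain x where x: "x \<in> VS n S" "z = 2*n+1 - x" by blast
    have x1: "x \<le> 2*n+1" "x \<notin> S" "x \<notin> Suc ` S" using x by (auto simp: VS_def)
    have "z \<notin> Rf n S"
    proof
      assume "z \<in> Rf n S"
      then obtain c where c: "c \<in> S" "z = 2*n - c" by (auto simp: Rf_def)
      have "c < 2*n+1" using c S by auto
      then have "x = Suc c" using c x x1 by simp
      then show False using x1 c by blast
    qed
    moreover have "z \<notin> Suc ` Rf n S"
    proof
      assume "z \<in> Suc ` Rf n S"
      then obtain c where c: "c \<in> S" "z = Suc (2*n - c)" by (auto simp: Rf_def)
      have "c < 2*n+1" using c S by auto
      then have "x = c" using c x x1 by simp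
      then show False using x1 c by blast
    qed
    ultimately show "z \<in> VS n (Rf n S)" using x by (simp add: VS_def)
  qed
qed

lemma sigma_build:
  assumes S: "S \<subseteq> {..<2*n+1}"
  shows "sigma n (build n S) = build n (Rf n S)"
proof -
  have Sle: "\<And>c. c \<in> S \<Longrightarrow> c \<le> 2*n" using S by auto
  have 1: "reflect_edge n ` (\<lambda>c. hz c y) ` S = (\<lambda>c. hz c y) ` Rf n S" for y
  proof -
    have "reflect_edge n ` (\<lambda>c. hz c y) ` S = (\<lambda>c. hz (2*n - c) y) ` S"
      unfolding image_image by (rule image_cong) (use refl_hz Sle in auto)
    also have "\<dots> = (\<lambda>c. hz c y) ` Rf n S" unfolding Rf_def image_image by simp
    finally show ?thesis .
  qed
  have 2: "reflect_edge n ` vt ` VS n S = vt ` VS n (Rf n S)"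
    unfolding VS_R[OF S] image_image refl_vt by simp
  show ?thesis unfolding sigma_def build_def image_Un 1 2 by simp
qed


definition TW :: "nat \<Rightarrow> edge set \<Rightarrow> nat set" where
  "TW n P = {c. c < 2*n+1 \<and> (c \<in> TS n P \<longleftrightarrow> odd c)}"

lemma tile_top_hz: "tile_top n i = hz (tile_col n i) 1"
  by (simp add: tile_top_def hz_def)

lemma tile_bot_hz: "tile_bot n i = hz (tile_col n i) 0"
  by (simp add: tile_bot_def hz_def)

lemma tiles_col: "i \<in> tiles n \<Longrightarrow> int (tile_col n i) = i + int n \<and> tile_col n i < 2*n+1"
  by (auto simp: tiles_def tile_col_def)

lemma col_inj: "i \<in> tiles n \<Longrightarrow> j \<in> tiles n \<Longrightarrow> tile_col n i = tile_col n j \<Longrightarrow> i = j"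
  using tiles_col by (metis add_right_cancel)

lemma fw_col: "i \<in> tiles n \<Longrightarrow> face_weight n i = (if even (tile_col n i) then 1 else 2)"
proof -
  assume i: "i \<in> tiles n"
  have "even (i + int n) = even (int (tile_col n i))" using tiles_col[OF i] by simp
  then show ?thesis by (simp add: face_weight_def)
qed

lemma top_Pmin: "i \<in> tiles n \<Longrightarrow> tile_top n i \<in> P_min n \<longleftrightarrow> even (tile_col n i)"
proof -
  assume i: "i \<in> tiles n"
  have "tile_top n i \<in> P_min n \<longleftrightarrow> (\<exists>j. j \<in> tiles n \<and> face_weight n j = 1 \<and> tile_top n i = tile_top n j)"
    unfolding P_min_def by (auto simp: tile_top_hz tile_bot_hz hz_eq)
  also have "\<dots> \<longleftrightarrow> face_weight n i = 1"
    using col_inj[OF i] i by (auto simp: tile_top_hz hz_eq)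
  also have "\<dots> \<longleftrightarrow> even (tile_col n i)" using fw_col[OF i] by simp
  finally show ?thesis .
qed

lemma card_single_int: "card ({x} \<inter> A) = (if x \<in> A then 1 else 0)"
  by (cases "x \<in> A") auto

lemma filter_img: "{x \<in> f ` U. P x} = f ` {c \<in> U. P (f c)}"
  by auto

lemma Twist_eq: "Twist n P = (\<lambda>c. int c - int n) ` TW n P"
proof
  show "Twist n P \<subseteq> (\<lambda>c. int c - int n) ` TW n P"
  proof
    fix i assume "i \<in> Twist n P"
    then have i: "i \<in> tiles n" "tile_top n i \<in> symdiff P (P_min n)"
      by (auto simp: Twist_def inside_cycles_def ray_crossed_def card_single_int split: if_splits)
    let ?c = "tile_col n i"
    have "?c \<in> TW n P"
      using i top_Pmin[OF i(1)] tiles_col[OF i(1)] by (auto simp: TW_def TS_def symdiff_def tile_top_hz)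
    moreover have "i = int ?c - int n" using tiles_col[OF i(1)] by simp
    ultimately show "i \<in> (\<lambda>c. int c - int n) ` TW n P" by blast
  qed
next
  show "(\<lambda>c. int c - int n) ` TW n P \<subseteq> Twist n P"
  proof
    fix i assume "i \<in> (\<lambda>c. int c - int n) ` TW n P"
    then obtain c where c: "c \<in> TW n P" "i = int c - int n" by blast
    have it: "i \<in> tiles n" using c by (auto simp: TW_def tiles_def)
    have col: "tile_col n i = c" using c by (simp add: tile_col_def)
    have "tile_top n i \<in> symdiff P (P_min n)"
      using c top_Pmin[OF it] col by (auto simp: TW_def TS_def symdiff_def tile_top_hz)
    then show "i \<in> Twist n P" using it
      by (auto simp: Twist_def inside_cycles_def ray_crossed_def card_single_int)
  qed
qed

lemma inj_shift: "inj_on (\<lambda>c::nat. int c - int n) A"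
  by (auto simp: inj_on_def)

lemma fw_shift: "face_weight n (int c - int n) = (if even c then 1 else 2)"
  by (simp add: face_weight_def)

lemma card_evens: "card {c::nat. c < 2*n+1 \<and> even c} = n + 1"
proof -
  have "{c::nat. c < 2*n+1 \<and> even c} = (\<lambda>j. 2*j) ` {..n}"
    by (auto simp: image_iff elim!: evenE)
  moreover have "inj_on (\<lambda>j::nat. 2*j) {..n}" by (auto simp: inj_on_def)
  ultimately show ?thesis by (simp add: card_image)
qed

lemma card_evens': "card {c::nat. c < Suc (2*n) \<and> even c} = Suc n"
  using card_evens[of n] by simp

lemma ycount1: "ycount n 1 P = n + 1 - ev (TS n P)"
proof -
  have "ycount n 1 P = card {c \<in> TW n P. even c}"
    unfolding ycount_def Twist_eq filter_img by (subst card_image) (auto simp: inj_on_def fw_shift intro!: arg_cong[where f = card])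
  also have "{c \<in> TW n P. even c} = {c. c < 2*n+1 \<and> even c} - {c \<in> TS n P. even c}"
    by (auto simp: TW_def TS_def)
  also have "card \<dots> = n + 1 - ev (TS n P)"
    by (subst card_Diff_subset) (auto simp: card_evens' ev_def TS_def)
  finally show ?thesis .
qed

lemma ycount2: "ycount n 2 P = od (TS n P)"
proof -
  have "ycount n 2 P = card {c \<in> TW n P. odd c}"
    unfolding ycount_def Twist_eq filter_img by (subst card_image) (auto simp: inj_on_def fw_shift intro!: arg_cong[where f = card])
  also have "{c \<in> TW n P. odd c} = {c \<in> TS n P. odd c}"
    by (auto simp: TW_def TS_def)
  finally show ?thesis by (simp add: od_def)
qed


lemma sum_j: "(\<Sum>j\<le>n. of_nat j * (2::rat)) = of_nat n * (of_nat n + 1)"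
  by (induction n) (simp_all add: algebra_simps)

lemma sum_Ev: "(\<Sum>c\<in>{c::nat. c < 2*n+1 \<and> even c}. (of_nat c - of_nat n) / (2::rat)) = 0"
proof -
  have e: "{c::nat. c < 2*n+1 \<and> even c} = (\<lambda>j. 2*j) ` {..n}"
    by (auto simp: image_iff elim!: evenE)
  have "(\<Sum>c\<in>{c::nat. c < 2*n+1 \<and> even c}. (of_nat c - of_nat n) / (2::rat))
     = (\<Sum>j\<le>n. (of_nat (2*j) - of_nat n) / 2)"
    unfolding e by (subst sum.reindex) (auto simp: inj_on_def)
  also have "\<dots> = (\<Sum>j\<le>n. of_nat j * 2 - of_nat n) / 2"
    by (simp add: sum_divide_distrib mult.commute)
  also have "\<dots> = 0" by (simp add: sum_subtractf sum_j)
  finally show ?thesis .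
qed

lemma alpha_eq: "alpha n P = - (\<Sum>c\<in>TS n P. (of_nat c - of_nat n) / (2::rat))"
proof -
  define g where "g = (\<lambda>c::nat. (of_nat c - of_nat n) / (2::rat))"
  let ?Ev = "{c::nat. c < 2*n+1 \<and> even c}"
  let ?S = "TS n P"
  have fS: "finite ?S" by (auto simp: TS_def)
  have at: "\<And>c. alpha_tile n (int c - int n) = (if even c then g c else - g c)"
    by (auto simp: alpha_tile_def face_weight_def g_def field_simps)
  have "alpha n P = (\<Sum>c\<in>TW n P. alpha_tile n (int c - int n))"
    unfolding alpha_def Twist_eq by (subst sum.reindex) (auto simp: inj_on_def)
  also have "\<dots> = (\<Sum>c\<in>TW n P. if even c then g c else - g c)" using at by simp
  also have "TW n P = (?Ev - ?S) \<union> {c \<in> ?S. odd c}" by (auto simp: TW_def TS_def)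
  also have "(\<Sum>c\<in>(?Ev - ?S) \<union> {c \<in> ?S. odd c}. if even c then g c else - g c)
      = (\<Sum>c\<in>?Ev - ?S. if even c then g c else - g c) + (\<Sum>c\<in>{c \<in> ?S. odd c}. if even c then g c else - g c)"
    by (rule sum.union_disjoint) (use fS in auto)
  also have "(\<Sum>c\<in>?Ev - ?S. if even c then g c else - g c) = (\<Sum>c\<in>?Ev - ?S. g c)"
    by (rule sum.cong) auto
  also have "(\<Sum>c\<in>{c \<in> ?S. odd c}. if even c then g c else - g c) = (\<Sum>c\<in>{c \<in> ?S. odd c}. - g c)"
    by (rule sum.cong) auto
  also have "(\<Sum>c\<in>?Ev - ?S. g c) = (\<Sum>c\<in>?Ev. g c) - (\<Sum>c\<in>{c \<in> ?S. even c}. g c)"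
  proof -
    have "?Ev - ?S = ?Ev - {c \<in> ?S. even c}" by auto
    moreover have "{c \<in> ?S. even c} \<subseteq> ?Ev" by (auto simp: TS_def)
    ultimately show ?thesis by (simp add: sum_diff)
  qed
  also have "(\<Sum>c\<in>?Ev. g c) = 0" using sum_Ev[of n] by (simp add: g_def)
  also have "(\<Sum>c\<in>?S. g c) = (\<Sum>c\<in>{c \<in> ?S. even c}. g c) + (\<Sum>c\<in>{c \<in> ?S. odd c}. g c)"
  proof -
    have "?S = {c \<in> ?S. even c} \<union> {c \<in> ?S. odd c}" by auto
    then have "(\<Sum>c\<in>?S. g c) = (\<Sum>c\<in>{c \<in> ?S. even c} \<union> {c \<in> ?S. odd c}. g c)" by simp
    also have "\<dots> = (\<Sum>c\<in>{c \<in> ?S. even c}. g c) + (\<Sum>c\<in>{c \<in> ?S. odd c}. g c)"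
      by (rule sum.union_disjoint) (use fS in auto)
    finally show ?thesis .
  qed
  ultimately have "alpha n P = - (\<Sum>c\<in>?S. g c)" by (simp add: sum_negf)
  then show ?thesis by (simp add: g_def)
qed

lemma tri2: "2 * tri k + k = k * k"
  by (induction k) (simp_all add: algebra_simps)

lemma gs_R:
  assumes S: "S \<subseteq> {..<2*n+1}"
  shows "(of_nat (gs (Rf n S)) :: rat) = (2 * of_nat n * of_nat (card S) - (\<Sum>c\<in>S. of_nat c) - of_nat (od S)) / 2"
proof -
  have fS: "finite S" using S finite_subset by blast
  have "gs (Rf n S) = (\<Sum>c\<in>S. (2*n - c) div 2)"
  proof -
    have "inj_on (\<lambda>c. 2*n - c) S" by (rule inj_on_subset[OF inj_R[of n]]) (use S in auto)
    then show ?thesis unfolding gs_def Rf_def by (simp add: sum.reindex)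
  qed
  then have "(of_nat (gs (Rf n S)) :: rat) = (\<Sum>c\<in>S. of_nat ((2*n - c) div 2))" by simp
  also have "\<dots> = (\<Sum>c\<in>S. (2 * of_nat n - of_nat c - (if odd c then 1 else 0)) / 2)"
  proof (rule sum.cong[OF refl])
    fix c assume "c \<in> S"
    then have c: "c \<le> 2*n" using S by auto
    define m where "m = 2*n - c"
    have om: "odd m = odd c" using par_R[OF c] by (simp add: m_def)
    have E: "2 * (m div 2) + (if odd c then 1 else 0) = m"
      using om by (cases "odd c") (simp_all add: odd_two_times_div_two_succ)
    have "(2 * of_nat (m div 2) + (if odd c then 1 else 0) :: rat) = of_nat (2 * (m div 2) + (if odd c then 1 else 0))"
      by simp
    also have "\<dots> = of_nat m" using E by simp
    finally have "(2 * of_nat ((2*n - c) div 2) + (if odd c then 1 else 0) :: rat) = of_nat (2*n - c)"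
      by (simp add: m_def)
    also have "\<dots> = 2 * of_nat n - of_nat c" using c by (simp add: of_nat_diff)
    finally show "(of_nat ((2*n - c) div 2) :: rat) = (2 * of_nat n - of_nat c - (if odd c then 1 else 0)) / 2"
      by (cases "odd c"; simp; linarith)
  qed
  also have "\<dots> = ((\<Sum>c\<in>S. 2 * of_nat n) - (\<Sum>c\<in>S. of_nat c) - (\<Sum>c\<in>S. if odd c then 1 else 0)) / 2"
    by (simp only: sum_divide_distrib[symmetric] sum_subtractf)
  also have "(\<Sum>c\<in>S. if odd c then 1 else (0::rat)) = of_nat (od S)"
  proof -
    have "S \<inter> {c. odd c} = {c \<in> S. odd c}" by auto
    then show ?thesis using fS by (simp add: sum.If_cases od_def)
  qed
  finally show ?thesis by (simp add: mult.commute)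
qed


definition Phi :: "nat \<Rightarrow> edge set \<Rightarrow> nat set" where "Phi n P = Rf n (TS n P)"

lemma ev_TS_le: "ev (TS n P) \<le> n + 1"
proof -
  have "{c \<in> TS n P. even c} \<subseteq> {c. c < 2*n+1 \<and> even c}" by (auto simp: TS_def)
  then have "ev (TS n P) \<le> card {c::nat. c < 2*n+1 \<and> even c}" unfolding ev_def
    by (rule card_mono[rotated]) auto
  then show ?thesis using card_evens[of n] by simp
qed

lemma Match_char: "r \<le> n \<Longrightarrow> P \<in> Match n p r \<longleftrightarrow> perfect_matching n P \<and> ev (TS n P) = r \<and> od (TS n P) = p"
  unfolding Match_def Matchings_def using ycount1[of n P] ycount2[of n P] ev_TS_le[of n P] by auto

lemma Match_pm: "P \<in> Match n p r \<Longrightarrow> perfect_matching n P"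
  by (simp add: Match_def Matchings_def)

lemma R_IS: "S \<in> IS (2*n+1) e d \<Longrightarrow> Rf n S \<in> IS (2*n+1) e d"
proof -
  assume S: "S \<in> IS (2*n+1) e d"
  have Ss: "S \<subseteq> {..<2*n+1}" and i: "indep S" using S by (auto simp: IS_def)
  have S2: "S \<subseteq> {..2*n}" using Ss by auto
  have "Rf n S \<subseteq> {..<2*n+1}" unfolding Rf_def by auto
  moreover have "indep (Rf n S)"
    unfolding indep_def
  proof
    fix c assume c: "c \<in> Rf n S"
    show "Suc c \<notin> Rf n S"
    proof
      assume s: "Suc c \<in> Rf n S"
      obtain a where a: "a \<in> S" "c = 2*n - a" using c by (auto simp: Rf_def)
      obtain b where b: "b \<in> S" "Suc c = 2*n - b" using s by (auto simp: Rf_def)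
      have "a \<le> 2*n" "b \<le> 2*n" using a b S2 by auto
      then have "a = Suc b" using a b by simp
      then show False using i a b unfolding indep_def by blast
    qed
  qed
  moreover have "ev (Rf n S) = e" "od (Rf n S) = d" using ev_R[OF S2] od_R[OF S2] S by (auto simp: IS_def)
  ultimately show ?thesis by (simp add: IS_def)
qed

lemma Phi_bij: "r \<le> n \<Longrightarrow> bij_betw (Phi n) (Match n p r) (IS (2*n+1) r p)"
proof -
  assume rn: "r \<le> n"
  have TS_in: "P \<in> Match n p r \<Longrightarrow> TS n P \<in> IS (2*n+1) r p" for P
    using Match_char[OF rn] TS_sub TS_indep by (auto simp: IS_def)
  show ?thesis
  proof (rule bij_betwI')
    fix P Q assume P: "P \<in> Match n p r" and Q: "Q \<in> Match n p r"
    have pP: "perfect_matching n P" and pQ: "perfect_matching n Q" using P Q Match_char[OF rn, of P p] Match_char[OF rn, of Q p] by auto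
    show "(Phi n P = Phi n Q) = (P = Q)"
    proof
      assume "Phi n P = Phi n Q"
      then have "Rf n (Rf n (TS n P)) = Rf n (Rf n (TS n Q))" by (simp add: Phi_def)
      then have "TS n P = TS n Q" using RR TS_sub[OF pP] TS_sub[OF pQ] by (metis atMost_iff lessThan_iff less_Suc_eq_le subset_iff Suc_eq_plus1)
      then show "P = Q" using P_build[OF pP] P_build[OF pQ] by simp
    qed simp
  next
    fix P assume "P \<in> Match n p r"
    then show "Phi n P \<in> IS (2*n+1) r p" unfolding Phi_def using TS_in R_IS by blast
  next
    fix S assume S: "S \<in> IS (2*n+1) r p"
    let ?T = "Rf n S"
    have T: "?T \<in> IS (2*n+1) r p" using R_IS[OF S] .
    have Ts: "?T \<subseteq> {..<2*n+1}" "indep ?T" using T by (auto simp: IS_def)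
    let ?P = "build n ?T"
    have pm: "perfect_matching n ?P" by (rule build_pm[OF Ts])
    have TSP: "TS n ?P = ?T" by (rule TS_build[OF Ts(1)])
    have "?P \<in> Match n p r" using Match_char[OF rn] pm TSP T by (auto simp: IS_def)
    moreover have "S \<subseteq> {..2*n}" using S by (auto simp: IS_def)
    then have "S = Phi n ?P" unfolding Phi_def TSP using RR by metis
    ultimately show "\<exists>P\<in>Match n p r. S = Phi n P" by blast
  qed
qed

lemma wt_eq:
  assumes h: "p + r \<le> n" and P: "P \<in> Match n p r"
  shows "tri (p+r) \<le> gs (Phi n P) \<and> wt n p r P = of_nat (gs (Phi n P) - tri (p+r))"
proof -
  have rn: "r \<le> n" using h by simp
  let ?S = "TS n P"
  have pm: "perfect_matching n P" using Match_pm[OF P] .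
  have e: "ev ?S = r" "od ?S = p" using P Match_char[OF rn] by auto
  have Ss: "?S \<subseteq> {..<2*n+1}" by (rule TS_sub[OF pm])
  have fS: "finite ?S" using Ss finite_subset by blast
  have k: "card ?S = p + r" using card_ev_od[OF fS] e by simp
  have SIS: "?S \<in> IS (2*n+1) r p" using Ss TS_indep[OF pm] e by (simp add: IS_def)
  have RIS: "Phi n P \<in> IS (2*n+1) r p" unfolding Phi_def by (rule R_IS[OF SIS])
  have fR: "finite (Phi n P)" using RIS IS_fin by blast
  have kR: "card (Phi n P) = p + r" using card_ev_od[OF fR] RIS by (simp add: IS_def)
  have le: "tri (p+r) \<le> gs (Phi n P)" using indep_bound[of "Phi n P" "2*n+1"] RIS kR by (simp add: IS_def)
  define Sig where "Sig = (\<Sum>c\<in>?S. (of_nat c :: rat))"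
  have g: "(of_nat (gs (Phi n P)) :: rat) = (2 * of_nat n * of_nat (p+r) - Sig - of_nat p) / 2"
    using gs_R[OF Ss] k e unfolding Phi_def Sig_def by simp
  have t: "(of_nat (tri (p+r)) :: rat) = (of_nat (p+r) * of_nat (p+r) - of_nat (p+r)) / 2"
  proof -
    have "(of_nat (2 * tri (p+r) + (p+r)) :: rat) = of_nat ((p+r)*(p+r))" using tri2 by metis
    then show ?thesis by simp
  qed
  have a: "alpha n P = - (Sig - of_nat (p+r) * of_nat n) / 2"
  proof -
    have "(\<Sum>c\<in>?S. (of_nat c - of_nat n) / (2::rat)) = (Sig - (\<Sum>c\<in>?S. of_nat n)) / 2"
      unfolding Sig_def by (simp only: sum_divide_distrib[symmetric] sum_subtractf)
    also have "(\<Sum>c\<in>?S. (of_nat n :: rat)) = of_nat (p+r) * of_nat n" using k by simp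
    finally show ?thesis using alpha_eq[of n P] by simp
  qed
  have nrp: "(of_nat (n - r - p) :: rat) = of_nat n - of_nat r - of_nat p" using h by (simp add: of_nat_diff)
  have "wt n p r P = (of_nat r + (of_nat n - of_nat r - of_nat p) * of_nat (p + r)) / 2 - (Sig - of_nat (p+r) * of_nat n) / 2"
    unfolding wt_def a nrp by (simp add: field_simps)
  also have "\<dots> = (2 * of_nat n * of_nat (p+r) - Sig - of_nat p) / 2 - (of_nat (p+r) * of_nat (p+r) - of_nat (p+r)) / 2"
    by (simp add: field_simps)
  also have "\<dots> = of_nat (gs (Phi n P) - tri (p+r))" by (simp only: of_nat_diff[OF le] g t)
  finally show ?thesis using le by simp
qed

lemma fix_iff:
  assumes rn: "r \<le> n" and P: "P \<in> Match n p r"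
  shows "sigma n P = P \<longleftrightarrow> Rf n (Phi n P) = Phi n P"
proof -
  have pm: "perfect_matching n P" using Match_pm[OF P] .
  let ?T = "TS n P"
  have Ts: "?T \<subseteq> {..<2*n+1}" by (rule TS_sub[OF pm])
  have T2: "?T \<subseteq> {..2*n}" using Ts by auto
  have RTs: "Rf n ?T \<subseteq> {..<2*n+1}" unfolding Rf_def by auto
  have sP: "sigma n P = build n (Rf n ?T)" using sigma_build[OF Ts] P_build[OF pm] by simp
  have "sigma n P = P \<longleftrightarrow> build n (Rf n ?T) = build n ?T" using sP P_build[OF pm] by simp
  also have "\<dots> \<longleftrightarrow> Rf n ?T = ?T" using TS_build[OF RTs] TS_build[OF Ts] by metis
  also have "\<dots> \<longleftrightarrow> Rf n (Rf n ?T) = Rf n ?T" using RR[OF T2] by metis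
  finally show ?thesis by (simp add: Phi_def)
qed

theorem mainTheorem12:
  fixes n p r :: nat
  assumes "p + r \<le> n"
  defines "X \<equiv> qbinom (n - r) p * qbinom (n + 1 - p) r"
  shows "(\<forall>P\<in>Match n p r. \<exists>m::nat. wt n p r P = of_nat m)
       \<and> X = (\<Sum>P\<in>Match n p r. monom 1 (nat \<lfloor>wt n p r P\<rfloor>))
       \<and> poly X (-1) = int (card {P \<in> Match n p r. sigma n P = P})"
proof (intro conjI)
  have h: "p + r \<le> n" by fact
  have rn: "r \<le> n" using h by simp
  have bij: "bij_betw (Phi n) (Match n p r) (IS (2*n+1) r p)" by (rule Phi_bij[OF rn])
  show "\<forall>P\<in>Match n p r. \<exists>m::nat. wt n p r P = of_nat m"
    using wt_eq[OF h] by blast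
  have "(\<Sum>P\<in>Match n p r. monom 1 (nat \<lfloor>wt n p r P\<rfloor>)) = (\<Sum>P\<in>Match n p r. monom (1::int) (gs (Phi n P) - tri (p+r)))"
  proof (rule sum.cong[OF refl])
    fix P assume "P \<in> Match n p r"
    then have "wt n p r P = of_nat (gs (Phi n P) - tri (p+r))" using wt_eq[OF h] by blast
    then show "monom 1 (nat \<lfloor>wt n p r P\<rfloor>) = monom (1::int) (gs (Phi n P) - tri (p+r))" by simp
  qed
  also have "\<dots> = (\<Sum>S\<in>IS (2*n+1) r p. monom 1 (gs S - tri (p+r)))"
    by (rule sum.reindex_bij_betw[OF bij])
  also have "\<dots> = X" unfolding X_def by (rule sum_shift[OF h])
  finally show "X = (\<Sum>P\<in>Match n p r. monom 1 (nat \<lfloor>wt n p r P\<rfloor>))" by simp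
  have inj: "inj_on (Phi n) (Match n p r)" using bij by (simp add: bij_betw_def)
  have img: "Phi n ` Match n p r = IS (2*n+1) r p" using bij by (simp add: bij_betw_def)
  have "Phi n ` {P \<in> Match n p r. sigma n P = P} = {S \<in> IS (2*n+1) r p. Rf n S = S}"
  proof
    show "Phi n ` {P \<in> Match n p r. sigma n P = P} \<subseteq> {S \<in> IS (2*n+1) r p. Rf n S = S}"
      using fix_iff[OF rn] img by auto
  next
    show "{S \<in> IS (2*n+1) r p. Rf n S = S} \<subseteq> Phi n ` {P \<in> Match n p r. sigma n P = P}"
    proof
      fix S assume S: "S \<in> {S \<in> IS (2*n+1) r p. Rf n S = S}"
      then obtain P where P: "P \<in> Match n p r" "S = Phi n P" using img by (metis (no_types, lifting) imageE mem_Collect_eq)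
      then have "sigma n P = P" using fix_iff[OF rn P(1)] S by simp
      then show "S \<in> Phi n ` {P \<in> Match n p r. sigma n P = P}" using P by blast
    qed
  qed
  then have "card {P \<in> Match n p r. sigma n P = P} = card {S \<in> IS (2*n+1) r p. Rf n S = S}"
    using card_image[OF inj_on_subset[OF inj, of "{P \<in> Match n p r. sigma n P = P}"]] by auto
  then show "poly X (-1) = int (card {P \<in> Match n p r. sigma n P = P})"
    unfolding X_def using qm1[OF h] by simp
qed


end
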